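(* Let $n\in\mathbb{N}$, $\hbar\in{]0,\infty[}$ and $\mu\in\mathbb{R}\setminus\big(\{\hbar k:k\in\mathbb{N}_0\}\cup\{-\hbar(1+n+k):k\in\mathbb{N}_0\}\big)$. Then $-\mathbb{1}\in(\mathcal{B}_\hbar)^{++}_{\mathrm H}+(\langle\mathcal{J}-\mu\rangle)_{\mathrm H}$.
   Context: $\mathscr{P}^{k,k}(\mathbb{C}^{1+n})$ is the span of $z^K\overline{z}^L$ ($K,L\in\mathbb{N}_0^{1+n}$, $|K|=|L|=k$). Wick product: $f\star_\hbar g=\sum_K\frac{\hbar^{|K|}}{K!}\frac{\partial^{|K|}f}{\partial\overline{z}^K}\frac{\partial^{|K|}g}{\partial z^K}$, involution pointwise conjugation. $\mathcal{B}_\hbar=\bigoplus_k\mathscr{P}^{k,k}(\mathbb{C}^{1+n})$ with $\star_\hbar$; $(\mathcal{B}_\hbar)^{++}_{\mathrm H}$ is the set of finite sums $\sum\overline{g_j}\star_\hbar g_j$; $\mathcal{J}=\sum_jz_j\overline{z_j}$; $\langle\mathcal{J}-\mu\rangle$ is the $^*$-ideal of $\mathcal{B}_\hbar$ generated by $\mathcal{J}-\mu\mathbb{1}$, and $(\cdot)_{\mathrm H}$ denotes its real-valued (Hermitian) elements. *)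

theory Defs
  imports Complex_Main
begin

text \<open>Polynomials in z, conj z on C^(1+n) (variables indexed by 0..n) are represented by
  their coefficient functions: p (K,L) is the coefficient of z^K (conj z)^L.
  Multi-indices are functions nat => nat vanishing outside {..n}.\<close>

type_synonym midx = "nat \<Rightarrow> nat"
type_synonym bpoly = "midx \<times> midx \<Rightarrow> complex"

definition idx_ok :: "nat \<Rightarrow> midx \<Rightarrow> bool" where
  "idx_ok n K \<longleftrightarrow> (\<forall>i>n. K i = 0)"

definition mdeg :: "nat \<Rightarrow> midx \<Rightarrow> nat" where
  "mdeg n K = (\<Sum>i\<le>n. K i)"

definition mfact :: "nat \<Rightarrow> midx \<Rightarrow> complex" where
  "mfact n K = (\<Prod>i\<le>n. fact (K i))"

text \<open>coefficient factor of the derivative d^M/dx^M x^L = L!/(L-M)! x^(L-M)\<close>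
definition dfactor :: "nat \<Rightarrow> midx \<Rightarrow> midx \<Rightarrow> complex" where
  "dfactor n L M = (\<Prod>i\<le>n. fact (L i) / fact (L i - M i))"

definition supp :: "bpoly \<Rightarrow> (midx \<times> midx) set" where
  "supp p = {m. p m \<noteq> 0}"

text \<open>The algebra B_hbar as a set: direct sum of the P^{k,k}.\<close>
definition Balg :: "nat \<Rightarrow> bpoly set" where
  "Balg n = {p. finite (supp p) \<and>
     (\<forall>K L. p (K, L) \<noteq> 0 \<longrightarrow> idx_ok n K \<and> idx_ok n L \<and> mdeg n K = mdeg n L)}"

text \<open>Wick product: f * g = sum_M hbar^|M|/M! (d^M f/d conj z^M) (d^M g/d z^M),
  extended bilinearly from monomials.\<close>
definition wick :: "nat \<Rightarrow> real \<Rightarrow> bpoly \<Rightarrow> bpoly \<Rightarrow> bpoly" where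
  "wick n h p q = (\<lambda>(K, L).
     \<Sum>a\<in>supp p. \<Sum>b\<in>supp q.
       \<Sum>M\<in>{M. idx_ok n M \<and> (\<forall>i. M i \<le> snd a i \<and> M i \<le> fst b i)}.
         (if K = (\<lambda>i. fst a i + fst b i - M i) \<and> L = (\<lambda>i. snd a i - M i + snd b i)
          then p a * q b * complex_of_real h ^ mdeg n M / mfact n M
               * dfactor n (snd a) M * dfactor n (fst b) M
          else 0))"

text \<open>Involution: pointwise complex conjugation of the polynomial function.\<close>
definition pstar :: "bpoly \<Rightarrow> bpoly" where
  "pstar p = (\<lambda>(K, L). cnj (p (L, K)))"

definition padd :: "bpoly \<Rightarrow> bpoly \<Rightarrow> bpoly" where
  "padd p q = (\<lambda>m. p m + q m)"

definition psmult :: "complex \<Rightarrow> bpoly \<Rightarrow> bpoly" where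
  "psmult c p = (\<lambda>m. c * p m)"

definition punit :: bpoly where
  "punit = (\<lambda>(K, L). if K = (\<lambda>_. 0) \<and> L = (\<lambda>_. 0) then 1 else 0)"

definition unitidx :: "nat \<Rightarrow> midx" where
  "unitidx j = (\<lambda>i. if i = j then 1 else 0)"

text \<open>J = sum_{j=0}^n z_j conj z_j\<close>
definition Jpoly :: "nat \<Rightarrow> bpoly" where
  "Jpoly n = (\<lambda>(K, L). if \<exists>j\<le>n. K = unitidx j \<and> L = unitidx j then 1 else 0)"

definition poscone :: "nat \<Rightarrow> real \<Rightarrow> bpoly set" where
  "poscone n h = {x. \<exists>(m::nat) g. (\<forall>j<m. g j \<in> Balg n) \<and>
       x = (\<lambda>c. \<Sum>j<m. wick n h (pstar (g j)) (g j) c)}"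

definition star_ideal :: "nat \<Rightarrow> real \<Rightarrow> bpoly set \<Rightarrow> bpoly set" where
  "star_ideal n h S = \<Inter>{I. I \<subseteq> Balg n \<and> S \<subseteq> I \<and> (\<lambda>_. 0) \<in> I
       \<and> (\<forall>x\<in>I. \<forall>y\<in>I. padd x y \<in> I)
       \<and> (\<forall>c. \<forall>x\<in>I. psmult c x \<in> I)
       \<and> (\<forall>a\<in>Balg n. \<forall>x\<in>I. wick n h a x \<in> I \<and> wick n h x a \<in> I)
       \<and> (\<forall>x\<in>I. pstar x \<in> I)}"

definition hermitian_part :: "bpoly set \<Rightarrow> bpoly set" where
  "hermitian_part A = {x\<in>A. pstar x = x}"

end

theory Submission
  imports Defs
begin


lemma binom_c: "k \<le> m \<Longrightarrow> (of_nat (m choose k) :: complex) = fact m / (fact k * fact (m - k))"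
  by (simp add: binomial_fact)

lemma SV_term:
  fixes B la kb lb m :: nat
  assumes m: "m \<le> la" "m \<le> kb" and kB: "kb \<le> B + la"
  shows "(if kb - m \<le> B then 1 / fact m * (fact la / fact (la - m)) * (fact kb / fact (kb - m)) *
      (fact (B - (kb - m) + (la - m + lb)) / fact (B - (kb - m))) else 0 :: complex)
    = fact (B + la - kb + lb) * fact kb / fact B * (of_nat (la choose m) * of_nat (B choose (kb - m)))"
proof (cases "kb - m \<le> B")
  case True
  have e: "B - (kb - m) + (la - m + lb) = B + la - kb + lb" using True m by linarith
  have "(of_nat (la choose m) :: complex) = fact la / (fact m * fact (la - m))" using m by (simp add: binomial_fact)
  moreover have "(of_nat (B choose (kb - m)) :: complex) = fact B / (fact (kb - m) * fact (B - (kb - m)))"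
    using True by (simp add: binomial_fact)
  ultimately show ?thesis using True apply (simp only: e if_True)
    by (simp add: field_simps)
next
  case False
  then show ?thesis by simp
qed

lemma SV:
  fixes A ka la kb lb :: nat
  shows "(if ka \<le> A \<and> kb \<le> A - ka + la then fact (A - ka + la) / fact (A - ka) *
             (fact (A - ka + la - kb + lb) / fact (A - ka + la - kb)) else 0 :: complex)
   = (\<Sum>m\<le>min la kb. if ka + kb - m \<le> A then 1 / fact m * (fact la / fact (la - m)) *
         (fact kb / fact (kb - m)) * (fact (A - (ka + kb - m) + (la - m + lb)) / fact (A - (ka + kb - m))) else 0)"
proof (cases "ka \<le> A")
  case False
  then have "\<forall>m\<in>{..min la kb}. \<not> ka + kb - m \<le> A" by auto
  then show ?thesis using False by (simp add: sum.neutral)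
next
  case True
  then obtain B where A: "A = ka + B" using le_Suc_ex by blast
  show ?thesis
  proof (cases "kb \<le> B + la")
    case False
    then have "\<forall>m\<in>{..min la kb}. \<not> ka + kb - m \<le> A" using A by auto
    then show ?thesis using False A by (simp add: sum.neutral)
  next
    case kB: True
    have "(\<Sum>m\<le>min la kb. if ka + kb - m \<le> A then 1 / fact m * (fact la / fact (la - m)) *
         (fact kb / fact (kb - m)) * (fact (A - (ka + kb - m) + (la - m + lb)) / fact (A - (ka + kb - m))) else 0)
      = (\<Sum>m\<le>min la kb. fact (B + la - kb + lb) * fact kb / fact B * (of_nat (la choose m) * of_nat (B choose (kb - m))) :: complex)"
    proof (rule sum.cong)
      fix m assume "m \<in> {..min la kb}"
      then have m: "m \<le> la" "m \<le> kb" by auto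
      have c: "(ka + kb - m \<le> A) = (kb - m \<le> B)" "A - (ka + kb - m) = B - (kb - m)" using A m by auto
      show "(if ka + kb - m \<le> A then 1 / fact m * (fact la / fact (la - m)) *
         (fact kb / fact (kb - m)) * (fact (A - (ka + kb - m) + (la - m + lb)) / fact (A - (ka + kb - m))) else 0) =
         fact (B + la - kb + lb) * fact kb / fact B * (of_nat (la choose m) * of_nat (B choose (kb - m)) :: complex)"
        unfolding c by (rule SV_term[OF m kB])
    qed simp
    also have "\<dots> = fact (B + la - kb + lb) * fact kb / fact B * of_nat (\<Sum>m\<le>min la kb. (la choose m) * (B choose (kb - m)))"
      by (simp add: sum_distrib_left)
    also have "(\<Sum>m\<le>min la kb. (la choose m) * (B choose (kb - m))) = (\<Sum>m\<le>kb. (la choose m) * (B choose (kb - m)))"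
      by (rule sum.mono_neutral_left) auto
    also have "\<dots> = (la + B) choose kb" by (rule vandermonde)
    finally have R: "(\<Sum>m\<le>min la kb. if ka + kb - m \<le> A then 1 / fact m * (fact la / fact (la - m)) *
         (fact kb / fact (kb - m)) * (fact (A - (ka + kb - m) + (la - m + lb)) / fact (A - (ka + kb - m))) else 0)
       = fact (B + la - kb + lb) * fact kb / fact B * (of_nat ((la + B) choose kb) :: complex)" .
    have L1: "(of_nat ((la + B) choose kb) :: complex) = fact (B + la) / (fact kb * fact (B + la - kb))"
      using kB by (simp add: binomial_fact add.commute)
    have e1: "A - ka + la = B + la" "A - ka = B" "A - ka + la - kb + lb = B + la - kb + lb" using A by auto
    have L2: "(of_nat ((B + la) choose kb) :: complex) = fact (B + la) / (fact kb * fact (B + la - kb))"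
      using kB by (simp add: binomial_fact)
    show ?thesis unfolding R using kB A by (simp add: e1 L1 L2 field_simps)
  qed
qed



definition P :: "nat \<Rightarrow> bpoly set" where
  "P n = {p. finite (supp p) \<and> (\<forall>c\<in>supp p. idx_ok n (fst c) \<and> idx_ok n (snd c))}"

definition Ms :: "nat \<Rightarrow> midx \<times> midx \<Rightarrow> midx \<times> midx \<Rightarrow> midx set" where
  "Ms n a b = {M. idx_ok n M \<and> (\<forall>i. M i \<le> snd a i \<and> M i \<le> fst b i)}"

definition coef :: "nat \<Rightarrow> real \<Rightarrow> midx \<times> midx \<Rightarrow> midx \<times> midx \<Rightarrow> midx \<Rightarrow> complex" where
  "coef n h a b M = complex_of_real h ^ mdeg n M / mfact n M * dfactor n (snd a) M * dfactor n (fst b) M"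

definition idx :: "midx \<times> midx \<Rightarrow> midx \<times> midx \<Rightarrow> midx \<Rightarrow> midx \<times> midx" where
  "idx a b M = ((\<lambda>i. fst a i + fst b i - M i), (\<lambda>i. snd a i - M i + snd b i))"

definition shiftA :: "midx \<Rightarrow> midx \<Rightarrow> midx \<Rightarrow> midx" where
  "shiftA K L A = (\<lambda>i. A i - K i + L i)"

definition cnd :: "nat \<Rightarrow> midx \<Rightarrow> midx \<Rightarrow> bool" where
  "cnd n K A \<longleftrightarrow> (\<forall>i\<le>n. K i \<le> A i)"

definition wgt :: "nat \<Rightarrow> real \<Rightarrow> midx \<times> midx \<Rightarrow> midx \<Rightarrow> complex" where
  "wgt n h c A = (if cnd n (fst c) A then complex_of_real h ^ mdeg n (snd c) *
      (\<Prod>i\<le>n. fact (A i - fst c i + snd c i) / fact (A i - fst c i)) else 0)"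

definition phm :: "nat \<Rightarrow> real \<Rightarrow> midx \<times> midx \<Rightarrow> (midx \<Rightarrow> complex) \<Rightarrow> midx \<Rightarrow> complex" where
  "phm n h c f A = wgt n h c A * f (shiftA (fst c) (snd c) A)"

definition Phi :: "nat \<Rightarrow> real \<Rightarrow> bpoly \<Rightarrow> (midx \<Rightarrow> complex) \<Rightarrow> midx \<Rightarrow> complex" where
  "Phi n h p f A = (\<Sum>c\<in>supp p. p c * phm n h c f A)"

definition Box :: "nat \<Rightarrow> midx \<Rightarrow> midx set" where
  "Box n U = {M. idx_ok n M \<and> (\<forall>i. M i \<le> U i)}"

lemma Box_0: "Box 0 U = (\<lambda>k. (\<lambda>i. if i = 0 then k else 0)) ` {..U 0}"
proof
  show "Box 0 U \<subseteq> (\<lambda>k. (\<lambda>i. if i = 0 then k else 0)) ` {..U 0}"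
  proof
    fix M assume "M \<in> Box 0 U"
    then have "M = (\<lambda>i. if i = 0 then M 0 else 0)" "M 0 \<le> U 0" by (auto simp: Box_def idx_ok_def fun_eq_iff)
    then show "M \<in> (\<lambda>k. (\<lambda>i. if i = 0 then k else 0)) ` {..U 0}" by blast
  qed
  show "(\<lambda>k. (\<lambda>i. if i = 0 then k else 0)) ` {..U 0} \<subseteq> Box 0 U"
    by (auto simp: Box_def idx_ok_def)
qed

lemma Box_Suc: "Box (Suc n) U = (\<lambda>(M, k). M(Suc n := k)) ` (Box n U \<times> {..U (Suc n)})"
proof
  show "Box (Suc n) U \<subseteq> (\<lambda>(M, k). M(Suc n := k)) ` (Box n U \<times> {..U (Suc n)})"
  proof
    fix M assume M: "M \<in> Box (Suc n) U"
    then have "M = (\<lambda>(M, k). M(Suc n := k)) (M(Suc n := 0), M (Suc n))"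
      "(M(Suc n := 0), M (Suc n)) \<in> Box n U \<times> {..U (Suc n)}"
      by (auto simp: Box_def idx_ok_def fun_eq_iff)
    then show "M \<in> (\<lambda>(M, k). M(Suc n := k)) ` (Box n U \<times> {..U (Suc n)})" by blast
  qed
  show "(\<lambda>(M, k). M(Suc n := k)) ` (Box n U \<times> {..U (Suc n)}) \<subseteq> Box (Suc n) U"
    by (auto simp: Box_def idx_ok_def)
qed

lemma finite_Box: "finite (Box n U)"
  by (induction n) (auto simp: Box_0 Box_Suc)

lemma finite_bounded_idx: "finite {M::midx. idx_ok n M \<and> (\<forall>i. M i \<le> B i)}"
  using finite_Box[of n B] by (simp add: Box_def)

lemma sum_Box_prod:
  fixes g :: "nat \<Rightarrow> nat \<Rightarrow> complex"
  shows "(\<Sum>M\<in>Box n U. \<Prod>i\<le>n. g i (M i)) = (\<Prod>i\<le>n. \<Sum>m\<le>U i. g i m)"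
proof (induction n)
  case 0
  have inj: "inj_on (\<lambda>k. (\<lambda>i. if i = 0 then k else 0)) {..U 0}" by (auto simp: inj_on_def fun_eq_iff)
  show ?case unfolding Box_0 by (simp add: sum.reindex[OF inj])
next
  case (Suc n)
  have inj: "inj_on (\<lambda>(M, k). M(Suc n := k)) (Box n U \<times> {..U (Suc n)})"
  proof (rule inj_onI, clarify)
    fix M k M' k' assume "M \<in> Box n U" "M' \<in> Box n U" and e: "M(Suc n := k) = M'(Suc n := k')"
    then have "M (Suc n) = 0" "M' (Suc n) = 0" by (auto simp: Box_def idx_ok_def)
    with e show "M = M' \<and> k = k'" by (auto simp: fun_eq_iff) (metis fun_upd_apply)+
  qed
  have "(\<Sum>M\<in>Box (Suc n) U. \<Prod>i\<le>Suc n. g i (M i)) =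
      (\<Sum>(M, k)\<in>Box n U \<times> {..U (Suc n)}. \<Prod>i\<le>Suc n. g i ((M(Suc n := k)) i))"
    unfolding Box_Suc using sum.reindex[OF inj, of "\<lambda>M. \<Prod>i\<le>Suc n. g i (M i)"]
    by (simp add: comp_def case_prod_unfold)
  also have "\<dots> = (\<Sum>(M, k)\<in>Box n U \<times> {..U (Suc n)}. (\<Prod>i\<le>n. g i (M i)) * g (Suc n) k)"
    by (intro sum.cong refl) (auto simp: prod.atMost_Suc intro!: prod.cong)
  also have "\<dots> = (\<Sum>M\<in>Box n U. \<Prod>i\<le>n. g i (M i)) * (\<Sum>k\<le>U (Suc n). g (Suc n) k)"
    by (simp add: sum_product sum.cartesian_product)
  also have "\<dots> = (\<Prod>i\<le>Suc n. \<Sum>m\<le>U i. g i m)" by (simp add: Suc prod.atMost_Suc)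
  finally show ?case .
qed

lemma Ms_Box: "Ms n (Ka, La) (Kb, Lb) = Box n (\<lambda>i. min (La i) (Kb i))"
  by (auto simp: Ms_def Box_def)

lemma finite_Ms: "finite (Ms n a b)"
  unfolding Ms_def by (rule finite_subset[OF _ finite_bounded_idx[of n "snd a"]]) auto

lemma sum_Ms_PiE:
  fixes g :: "nat \<Rightarrow> nat \<Rightarrow> complex"
  shows "(\<Sum>M\<in>Ms n (Ka, La) (Kb, Lb). \<Prod>i\<le>n. g i (M i)) = (\<Prod>i\<le>n. \<Sum>m\<le>min (La i) (Kb i). g i m)"
  unfolding Ms_Box by (rule sum_Box_prod)

lemma prod_zero_ex: "finite A \<Longrightarrow> i \<in> A \<Longrightarrow> f i = (0::complex) \<Longrightarrow> prod f A = 0"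
  by (metis prod_zero_iff)

lemma mdeg_add_sub:
  assumes "\<forall>i. M i \<le> La i"
  shows "mdeg n M + mdeg n (\<lambda>i. La i - M i + Lb i) = mdeg n La + mdeg n Lb"
proof -
  have e: "M i + (La i - M i + Lb i) = La i + Lb i" for i using assms[rule_format, of i] by simp
  show ?thesis unfolding mdeg_def sum.distrib[symmetric] by (rule sum.cong[OF refl]) (rule e)
qed

lemma KL:
  assumes ok: "idx_ok n Ka" "idx_ok n La" "idx_ok n Kb" "idx_ok n Lb"
  shows "phm n h (Ka, La) (phm n h (Kb, Lb) f) A =
    (\<Sum>M\<in>Ms n (Ka, La) (Kb, Lb). coef n h (Ka, La) (Kb, Lb) M * phm n h (idx (Ka, La) (Kb, Lb) M) f A)"
proof -
  define X where "X = shiftA Kb Lb (shiftA Ka La A)"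
  define \<phi> where "\<phi> i m = (if Ka i + Kb i - m \<le> A i then 1 / fact m * (fact (La i) / fact (La i - m)) *
         (fact (Kb i) / fact (Kb i - m)) * (fact (A i - (Ka i + Kb i - m) + (La i - m + Lb i)) / fact (A i - (Ka i + Kb i - m))) else (0::complex))" for i m
  define \<psi> where "\<psi> i = (if Ka i \<le> A i \<and> Kb i \<le> A i - Ka i + La i then fact (A i - Ka i + La i) / fact (A i - Ka i) *
             (fact (A i - Ka i + La i - Kb i + Lb i) / fact (A i - Ka i + La i - Kb i)) else (0::complex))" for i
  define H where "H = complex_of_real h ^ (mdeg n La + mdeg n Lb)"
  have L: "phm n h (Ka, La) (phm n h (Kb, Lb) f) A = H * (\<Prod>i\<le>n. \<psi> i) * f X"
  proof (cases "cnd n Ka A \<and> cnd n Kb (shiftA Ka La A)")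
    case True
    then have "\<psi> i = fact (A i - Ka i + La i) / fact (A i - Ka i) *
             (fact (A i - Ka i + La i - Kb i + Lb i) / fact (A i - Ka i + La i - Kb i))" if "i \<le> n" for i
      using that by (auto simp: \<psi>_def cnd_def shiftA_def)
    then have "(\<Prod>i\<le>n. \<psi> i) = (\<Prod>i\<le>n. fact (A i - Ka i + La i) / fact (A i - Ka i)) *
       (\<Prod>i\<le>n. fact (A i - Ka i + La i - Kb i + Lb i) / fact (A i - Ka i + La i - Kb i))"
      by (simp add: prod.distrib[symmetric])
    then show ?thesis using True unfolding phm_def wgt_def H_def X_def
      by (simp add: shiftA_def power_add)
  next
    case False
    then obtain i where i: "i \<le> n" "\<not> (Ka i \<le> A i \<and> Kb i \<le> A i - Ka i + La i)"
      unfolding cnd_def shiftA_def by blast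
    then have "(\<Prod>i\<le>n. \<psi> i) = 0" by (intro prod_zero_ex[of _ i]) (auto simp: \<psi>_def)
    then show ?thesis using False unfolding phm_def wgt_def by auto
  qed
  have S: "\<psi> i = (\<Sum>m\<le>min (La i) (Kb i). \<phi> i m)" for i
    unfolding \<psi>_def \<phi>_def by (rule SV)
  have R: "coef n h (Ka, La) (Kb, Lb) M * phm n h (idx (Ka, La) (Kb, Lb) M) f A = (\<Prod>i\<le>n. \<phi> i (M i)) * H * f X"
    if M: "M \<in> Ms n (Ka, La) (Kb, Lb)" for M
  proof -
    have Mle: "\<forall>i. M i \<le> La i" "\<forall>i. M i \<le> Kb i" and Mok: "idx_ok n M" using M by (auto simp: Ms_def)
    show ?thesis
    proof (cases "cnd n (\<lambda>i. Ka i + Kb i - M i) A")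
      case True
      have sh: "shiftA (\<lambda>i. Ka i + Kb i - M i) (\<lambda>i. La i - M i + Lb i) A = X"
      proof
        fix i show "shiftA (\<lambda>i. Ka i + Kb i - M i) (\<lambda>i. La i - M i + Lb i) A i = X i"
        proof (cases "i \<le> n")
          case True
          then have "Ka i + Kb i - M i \<le> A i" using \<open>cnd n _ A\<close> by (auto simp: cnd_def)
          then show ?thesis using Mle[rule_format, of i] by (simp add: shiftA_def X_def)
        next
          case False
          then show ?thesis using ok Mok by (simp add: shiftA_def X_def idx_ok_def)
        qed
      qed
      have ph: "(\<Prod>i\<le>n. \<phi> i (M i)) = (\<Prod>i\<le>n. 1 / fact (M i)) * (\<Prod>i\<le>n. fact (La i) / fact (La i - M i)) *
          (\<Prod>i\<le>n. fact (Kb i) / fact (Kb i - M i)) *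
          (\<Prod>i\<le>n. fact (A i - (Ka i + Kb i - M i) + (La i - M i + Lb i)) / fact (A i - (Ka i + Kb i - M i)))"
        using True by (simp add: \<phi>_def cnd_def prod.distrib[symmetric])
      have pw: "complex_of_real h ^ mdeg n M * complex_of_real h ^ mdeg n (\<lambda>i. La i - M i + Lb i) = H"
        unfolding H_def power_add[symmetric] using mdeg_add_sub[OF Mle(1)] by simp
      have mf: "(\<Prod>i\<le>n. 1 / fact (M i)) = 1 / mfact n M" unfolding mfact_def by (simp add: prod_dividef)
      show ?thesis using True unfolding coef_def phm_def wgt_def idx_def
        by (simp add: sh ph mf dfactor_def pw[symmetric])
    next
      case False
      then obtain i where i: "i \<le> n" "\<not> Ka i + Kb i - M i \<le> A i" by (auto simp: cnd_def)
      then have "(\<Prod>i\<le>n. \<phi> i (M i)) = 0" by (intro prod_zero_ex[of _ i]) (auto simp: \<phi>_def)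
      then show ?thesis using False unfolding phm_def wgt_def idx_def by simp
    qed
  qed
  have "(\<Sum>M\<in>Ms n (Ka, La) (Kb, Lb). coef n h (Ka, La) (Kb, Lb) M * phm n h (idx (Ka, La) (Kb, Lb) M) f A)
     = (\<Sum>M\<in>Ms n (Ka, La) (Kb, Lb). (\<Prod>i\<le>n. \<phi> i (M i))) * H * f X"
    by (simp add: R sum_distrib_right)
  also have "\<dots> = (\<Prod>i\<le>n. \<psi> i) * H * f X" by (simp add: sum_Ms_PiE S)
  finally show ?thesis using L by simp
qed



lemma wick_alt: "wick n h p q c = (\<Sum>a\<in>supp p. \<Sum>b\<in>supp q. \<Sum>M\<in>Ms n a b.
    if c = idx a b M then p a * q b * coef n h a b M else 0)"
proof -
  obtain K L where c: "c = (K, L)" by fastforce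
  show ?thesis unfolding c wick_def Ms_def idx_def coef_def case_prod_conv prod.inject
    by (intro sum.cong refl) (simp add: divide_inverse ac_simps)
qed

definition WS :: "nat \<Rightarrow> bpoly \<Rightarrow> bpoly \<Rightarrow> (midx \<times> midx) set" where
  "WS n p q = (\<Union>a\<in>supp p. \<Union>b\<in>supp q. idx a b ` Ms n a b)"

lemma P_finite: "p \<in> P n \<Longrightarrow> finite (supp p)" by (simp add: P_def)
lemma P_ok: "p \<in> P n \<Longrightarrow> c \<in> supp p \<Longrightarrow> idx_ok n (fst c) \<and> idx_ok n (snd c)" by (simp add: P_def)
lemma supp_iff: "c \<in> supp p \<longleftrightarrow> p c \<noteq> 0" by (simp add: supp_def)

lemma finite_WS: "p \<in> P n \<Longrightarrow> q \<in> P n \<Longrightarrow> finite (WS n p q)"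
  unfolding WS_def by (auto intro!: finite_imageI simp: finite_Ms P_finite)

lemma supp_wick: "supp (wick n h p q) \<subseteq> WS n p q"
proof
  fix c assume "c \<in> supp (wick n h p q)"
  then have "wick n h p q c \<noteq> 0" by (simp add: supp_def)
  have "\<exists>a\<in>supp p. \<exists>b\<in>supp q. \<exists>M\<in>Ms n a b. c = idx a b M"
  proof (rule ccontr)
    assume "\<not> (\<exists>a\<in>supp p. \<exists>b\<in>supp q. \<exists>M\<in>Ms n a b. c = idx a b M)"
    then have "wick n h p q c = 0" unfolding wick_alt by (auto intro!: sum.neutral)
    with \<open>wick n h p q c \<noteq> 0\<close> show False by simp
  qed
  then show "c \<in> WS n p q" unfolding WS_def by blast
qed

lemma WS_ok:
  assumes p: "p \<in> P n" and q: "q \<in> P n" and c: "c \<in> WS n p q"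
  shows "idx_ok n (fst c) \<and> idx_ok n (snd c)"
proof -
  obtain a b M where a: "a \<in> supp p" and b: "b \<in> supp q" and M: "M \<in> Ms n a b" and e: "c = idx a b M"
    using c unfolding WS_def by blast
  show ?thesis using P_ok[OF p a] P_ok[OF q b] M unfolding e by (auto simp: idx_def idx_ok_def Ms_def)
qed

lemma wick_P:
  assumes "p \<in> P n" "q \<in> P n" shows "wick n h p q \<in> P n"
proof -
  have "finite (supp (wick n h p q))" by (rule finite_subset[OF supp_wick finite_WS[OF assms]])
  moreover have "\<forall>c\<in>supp (wick n h p q). idx_ok n (fst c) \<and> idx_ok n (snd c)"
    using supp_wick[of n h p q] WS_ok[OF assms] by blast
  ultimately show ?thesis by (simp add: P_def)
qed

lemma Phi_superset: "finite S \<Longrightarrow> supp p \<subseteq> S \<Longrightarrow> Phi n h p f A = (\<Sum>c\<in>S. p c * phm n h c f A)"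
  unfolding Phi_def by (rule sum.mono_neutral_left) (auto simp: supp_def)

lemma phm_sum: "phm n h c (\<lambda>B. \<Sum>k\<in>S. g k B) A = (\<Sum>k\<in>S. phm n h c (g k) A)"
  unfolding phm_def by (simp add: sum_distrib_left)

lemma phm_mult: "phm n h c (\<lambda>B. x * g B) A = x * phm n h c g A"
  unfolding phm_def by (simp add: algebra_simps)

lemma Phi_wick:
  assumes p: "p \<in> P n" and q: "q \<in> P n"
  shows "Phi n h (wick n h p q) f A = Phi n h p (Phi n h q f) A"
proof -
  have "Phi n h (wick n h p q) f A = (\<Sum>c\<in>WS n p q. wick n h p q c * phm n h c f A)"
    by (rule Phi_superset[OF finite_WS[OF p q] supp_wick])
  also have "\<dots> = (\<Sum>c\<in>WS n p q. \<Sum>a\<in>supp p. \<Sum>b\<in>supp q. \<Sum>M\<in>Ms n a b.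
      (if c = idx a b M then p a * q b * coef n h a b M * phm n h (idx a b M) f A else 0))"
    unfolding wick_alt sum_distrib_right by (intro sum.cong refl) auto
  also have "\<dots> = (\<Sum>a\<in>supp p. \<Sum>b\<in>supp q. \<Sum>M\<in>Ms n a b. \<Sum>c\<in>WS n p q.
      (if c = idx a b M then p a * q b * coef n h a b M * phm n h (idx a b M) f A else 0))"
  proof -
    let ?F = "\<lambda>c a b M. (if c = idx a b M then p a * q b * coef n h a b M * phm n h (idx a b M) f A else 0)"
    have "(\<Sum>c\<in>WS n p q. \<Sum>a\<in>supp p. \<Sum>b\<in>supp q. \<Sum>M\<in>Ms n a b. ?F c a b M)
        = (\<Sum>a\<in>supp p. \<Sum>c\<in>WS n p q. \<Sum>b\<in>supp q. \<Sum>M\<in>Ms n a b. ?F c a b M)" by (rule sum.swap)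
    also have "\<dots> = (\<Sum>a\<in>supp p. \<Sum>b\<in>supp q. \<Sum>c\<in>WS n p q. \<Sum>M\<in>Ms n a b. ?F c a b M)"
      by (rule sum.cong[OF refl], rule sum.swap)
    also have "\<dots> = (\<Sum>a\<in>supp p. \<Sum>b\<in>supp q. \<Sum>M\<in>Ms n a b. \<Sum>c\<in>WS n p q. ?F c a b M)"
      by (rule sum.cong[OF refl], rule sum.cong[OF refl], rule sum.swap)
    finally show ?thesis .
  qed
  also have "\<dots> = (\<Sum>a\<in>supp p. \<Sum>b\<in>supp q. \<Sum>M\<in>Ms n a b.
      p a * q b * (coef n h a b M * phm n h (idx a b M) f A))"
  proof (intro sum.cong refl)
    fix a b M assume "a \<in> supp p" "b \<in> supp q" "M \<in> Ms n a b"
    then have "idx a b M \<in> WS n p q" unfolding WS_def by blast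
    then show "(\<Sum>c\<in>WS n p q. (if c = idx a b M then p a * q b * coef n h a b M * phm n h (idx a b M) f A else 0))
       = p a * q b * (coef n h a b M * phm n h (idx a b M) f A)"
      using finite_WS[OF p q] by (simp add: sum.delta mult.assoc)
  qed
  also have "\<dots> = (\<Sum>a\<in>supp p. \<Sum>b\<in>supp q. p a * q b * phm n h a (phm n h b f) A)"
  proof (intro sum.cong refl)
    fix a b assume a: "a \<in> supp p" and b: "b \<in> supp q"
    obtain Ka La where aa: "a = (Ka, La)" by fastforce
    obtain Kb Lb where bb: "b = (Kb, Lb)" by fastforce
    have ok: "idx_ok n Ka" "idx_ok n La" "idx_ok n Kb" "idx_ok n Lb"
      using P_ok[OF p a] P_ok[OF q b] aa bb by auto
    show "(\<Sum>M\<in>Ms n a b. p a * q b * (coef n h a b M * phm n h (idx a b M) f A)) = p a * q b * phm n h a (phm n h b f) A"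
      unfolding aa bb KL[OF ok] by (simp add: sum_distrib_left)
  qed
  also have "\<dots> = Phi n h p (Phi n h q f) A"
    unfolding Phi_def phm_sum phm_mult by (simp add: sum_distrib_left mult.assoc)
  finally show ?thesis .
qed

definition lc :: "complex \<Rightarrow> bpoly \<Rightarrow> complex \<Rightarrow> bpoly \<Rightarrow> bpoly" where
  "lc x p y q = (\<lambda>c. x * p c + y * q c)"

lemma supp_lc: "supp (lc x p y q) \<subseteq> supp p \<union> supp q"
  by (auto simp: supp_def lc_def)

lemma lc_P: "p \<in> P n \<Longrightarrow> q \<in> P n \<Longrightarrow> lc x p y q \<in> P n"
  using supp_lc[of x p y q] unfolding P_def by (auto intro: finite_subset)

lemma Phi_lc:
  assumes "p \<in> P n" "q \<in> P n"
  shows "Phi n h (lc x p y q) f A = x * Phi n h p f A + y * Phi n h q f A"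
proof -
  have fin: "finite (supp p \<union> supp q)" using assms by (simp add: P_finite)
  show ?thesis
    unfolding Phi_superset[OF fin supp_lc] Phi_superset[OF fin Un_upper1[of "supp p"]]
      Phi_superset[OF fin Un_upper2[of "supp q"]]
    by (simp add: lc_def sum.distrib sum_distrib_left algebra_simps)
qed

lemma Phi_zero_imp:
  assumes p: "p \<in> P n" and h: "h > 0" and z: "\<And>f A. Phi n h p f A = 0"
  shows "p = (\<lambda>_. 0)"
proof (rule ccontr)
  assume "p \<noteq> (\<lambda>_. 0)"
  then have ne: "supp p \<noteq> {}" by (auto simp: supp_def fun_eq_iff)
  have fin: "finite (supp p)" using p by (simp add: P_finite)
  define d where "d = Min ((\<lambda>c. mdeg n (snd c)) ` supp p)"
  have "d \<in> (\<lambda>c. mdeg n (snd c)) ` supp p" unfolding d_def using fin ne by (intro Min_in) auto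
  then obtain K L where c0: "(K, L) \<in> supp p" "mdeg n L = d" by auto
  have dmin: "d \<le> mdeg n (snd c)" if "c \<in> supp p" for c unfolding d_def using fin that by (intro Min_le) auto
  have ok0: "idx_ok n K" "idx_ok n L" using P_ok[OF p c0(1)] by auto
  define f where "f = (\<lambda>B. if B = L then 1 else (0::complex))"
  have other: "p c * phm n h c f K = 0" if c: "c \<in> supp p - {(K, L)}" for c
  proof (rule ccontr)
    obtain K' L' where cc: "c = (K', L')" by fastforce
    assume "p c * phm n h c f K \<noteq> 0"
    then have nz: "phm n h c f K \<noteq> 0" by auto
    have cn: "cnd n K' K" by (rule ccontr) (use nz in \<open>simp add: phm_def wgt_def cc\<close>)
    have sh: "shiftA K' L' K = L" by (rule ccontr) (use nz in \<open>simp add: phm_def f_def cc\<close>)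
    have shi: "K i - K' i + L' i = L i" for i using fun_cong[OF sh, of i] by (simp add: shiftA_def)
    have ok: "idx_ok n K'" "idx_ok n L'" using P_ok[OF p, of c] c cc by auto
    have le: "L' i \<le> L i" if "i \<le> n" for i using shi[of i] by arith
    have "mdeg n L \<le> mdeg n L'" using dmin[of c] c cc c0 by auto
    moreover have "mdeg n L' \<le> mdeg n L" unfolding mdeg_def by (rule sum_mono) (simp add: le)
    ultimately have "mdeg n L' = mdeg n L" by simp
    then have eqL: "L' i = L i" if "i \<le> n" for i
      using sum_mono_inv[of L' "{..n}" L i] le that unfolding mdeg_def by auto
    have eqK: "K' i = K i" if "i \<le> n" for i
    proof -
      have "K' i \<le> K i" using cn that by (simp add: cnd_def)
      then show ?thesis using shi[of i] eqL[OF that] by arith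
    qed
    have "K' = K"
    proof
      fix i show "K' i = K i" using eqK[of i] ok(1) ok0(1) by (cases "i \<le> n") (auto simp: idx_ok_def)
    qed
    moreover have "L' = L"
    proof
      fix i show "L' i = L i" using eqL[of i] ok(2) ok0(2) by (cases "i \<le> n") (auto simp: idx_ok_def)
    qed
    ultimately show False using c cc by simp
  qed
  have "Phi n h p f K = p (K, L) * phm n h (K, L) f K"
  proof -
    have "(\<Sum>c\<in>supp p - {(K, L)}. p c * phm n h c f K) = 0" by (rule sum.neutral) (use other in blast)
    then show ?thesis unfolding Phi_def using fin c0(1) by (simp add: sum.remove)
  qed
  also have "phm n h (K, L) f K = complex_of_real h ^ mdeg n L * (\<Prod>i\<le>n. fact (L i))"
  proof -
    have s1: "shiftA K L K = L" by (simp add: shiftA_def)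
    have s2: "cnd n K K" by (simp add: cnd_def)
    have s3: "(\<Prod>i\<le>n. fact (K i - K i + L i) / fact (K i - K i)) = (\<Prod>i\<le>n. fact (L i) :: complex)"
      by simp
    show ?thesis unfolding phm_def wgt_def fst_conv snd_conv s1 s3 f_def by (simp add: s2)
  qed
  finally have e: "Phi n h p f K = p (K, L) * (complex_of_real h ^ mdeg n L * (\<Prod>i\<le>n. fact (L i)))" .
  have nz1: "p (K, L) \<noteq> 0" using c0(1) by (simp add: supp_def)
  have nz2: "complex_of_real h ^ mdeg n L \<noteq> 0" using h by simp
  have nz3: "(\<Prod>i\<le>n. fact (L i) :: complex) \<noteq> 0" by (simp add: prod_zero_iff)
  have "Phi n h p f K \<noteq> 0" unfolding e using nz1 nz2 nz3 by simp
  with z show False by simp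
qed

lemma Phi_inj:
  assumes p: "p \<in> P n" and q: "q \<in> P n" and h: "h > 0" and e: "\<And>f A. Phi n h p f A = Phi n h q f A"
  shows "p = q"
proof -
  have "lc 1 p (-1) q = (\<lambda>_. 0)"
    by (rule Phi_zero_imp[OF lc_P[OF p q] h]) (simp add: Phi_lc[OF p q] e)
  then show ?thesis by (auto simp: lc_def fun_eq_iff)
qed



definition pz :: bpoly where "pz = (\<lambda>_. 0)"
definition psum :: "'k set \<Rightarrow> ('k \<Rightarrow> bpoly) \<Rightarrow> bpoly" where
  "psum S F = (\<lambda>c. \<Sum>k\<in>S. F k c)"

lemma padd_lc: "padd p q = lc 1 p 1 q" by (simp add: padd_def lc_def)
lemma psmult_lc: "psmult x p = lc x p 0 p" by (simp add: psmult_def lc_def)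

lemma padd_P[simp]: "p \<in> P n \<Longrightarrow> q \<in> P n \<Longrightarrow> padd p q \<in> P n"
  by (simp add: padd_lc lc_P)
lemma psmult_P[simp]: "p \<in> P n \<Longrightarrow> psmult x p \<in> P n"
  by (simp add: psmult_lc lc_P)
lemma pz_P[simp]: "pz \<in> P n" by (simp add: P_def pz_def supp_def)
lemma supp_psum: "supp (psum S F) \<subseteq> (\<Union>k\<in>S. supp (F k))"
proof
  fix c assume "c \<in> supp (psum S F)"
  then have "(\<Sum>k\<in>S. F k c) \<noteq> 0" by (simp add: supp_def psum_def)
  then obtain k where "k \<in> S" "F k c \<noteq> 0" by (meson sum.neutral)
  then show "c \<in> (\<Union>k\<in>S. supp (F k))" by (auto simp: supp_def)
qed
lemma psum_P[simp]:
  assumes S: "finite S" and F: "\<And>k. k \<in> S \<Longrightarrow> F k \<in> P n" shows "psum S F \<in> P n"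
proof -
  have "finite (supp (psum S F))" using S F P_finite by (blast intro: finite_subset[OF supp_psum])
  moreover have "\<forall>c\<in>supp (psum S F). idx_ok n (fst c) \<and> idx_ok n (snd c)"
    using supp_psum[of S F] F P_ok by blast
  ultimately show ?thesis by (simp add: P_def)
qed
lemma punit_P[simp]: "punit \<in> P n"
proof -
  have "supp punit = {((\<lambda>_. 0), (\<lambda>_. 0))}" by (auto simp: supp_def punit_def split: if_splits)
  then show ?thesis by (simp add: P_def idx_ok_def)
qed
lemma wick_P'[simp]: "p \<in> P n \<Longrightarrow> q \<in> P n \<Longrightarrow> wick n h p q \<in> P n" by (rule wick_P)

lemma Phi_padd: "p \<in> P n \<Longrightarrow> q \<in> P n \<Longrightarrow> Phi n h (padd p q) f A = Phi n h p f A + Phi n h q f A"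
  by (simp add: padd_lc Phi_lc)
lemma Phi_psmult: "p \<in> P n \<Longrightarrow> Phi n h (psmult x p) f A = x * Phi n h p f A"
  by (simp add: psmult_lc Phi_lc)
lemma Phi_pz: "Phi n h pz f A = 0" by (simp add: Phi_def pz_def supp_def)
lemma Phi_psum:
  assumes S: "finite S" and F: "\<And>k. k \<in> S \<Longrightarrow> F k \<in> P n"
  shows "Phi n h (psum S F) f A = (\<Sum>k\<in>S. Phi n h (F k) f A)"
proof -
  let ?U = "\<Union>k\<in>S. supp (F k)"
  have fin: "finite ?U" using S F P_finite by blast
  have "Phi n h (psum S F) f A = (\<Sum>c\<in>?U. psum S F c * phm n h c f A)"
    by (rule Phi_superset[OF fin supp_psum])
  also have "\<dots> = (\<Sum>k\<in>S. \<Sum>c\<in>?U. F k c * phm n h c f A)"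
    unfolding psum_def sum_distrib_right by (rule sum.swap)
  also have "\<dots> = (\<Sum>k\<in>S. Phi n h (F k) f A)"
  proof (rule sum.cong[OF refl])
    fix k assume "k \<in> S"
    then show "(\<Sum>c\<in>?U. F k c * phm n h c f A) = Phi n h (F k) f A"
      by (intro Phi_superset[symmetric] fin) auto
  qed
  finally show ?thesis .
qed
lemma Phi_punit: "Phi n h punit f A = f A"
proof -
  have s: "supp punit = {((\<lambda>_. 0), (\<lambda>_. 0))}" by (auto simp: supp_def punit_def split: if_splits)
  have "shiftA (\<lambda>_. 0) (\<lambda>_. 0) A = A" by (simp add: shiftA_def)
  then show ?thesis unfolding Phi_def s by (simp add: punit_def phm_def wgt_def cnd_def mdeg_def)
qed

lemma Phi_fadd: "Phi n h p (\<lambda>B. f B + g B) A = Phi n h p f A + Phi n h p g A"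
  unfolding Phi_def phm_def by (simp add: sum.distrib algebra_simps)
lemma Phi_fmult: "Phi n h p (\<lambda>B. x * f B) A = x * Phi n h p f A"
  unfolding Phi_def phm_def by (simp add: sum_distrib_left algebra_simps)
lemma Phi_fsum: "Phi n h p (\<lambda>B. \<Sum>k\<in>S. g k B) A = (\<Sum>k\<in>S. Phi n h p (g k) A)"
  unfolding Phi_def phm_def by (simp add: sum_distrib_left sum.swap[of _ S] algebra_simps)
lemma Phi_fzero: "Phi n h p (\<lambda>B. 0) A = 0"
  unfolding Phi_def phm_def by simp

lemma Phi_wick_fun: "p \<in> P n \<Longrightarrow> q \<in> P n \<Longrightarrow> Phi n h (wick n h p q) f = Phi n h p (Phi n h q f)"
  by (rule ext) (rule Phi_wick)
lemma Phi_padd_fun: "p \<in> P n \<Longrightarrow> q \<in> P n \<Longrightarrow> Phi n h (padd p q) f = (\<lambda>B. Phi n h p f B + Phi n h q f B)"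
  by (rule ext) (rule Phi_padd)
lemma Phi_psmult_fun: "p \<in> P n \<Longrightarrow> Phi n h (psmult x p) f = (\<lambda>B. x * Phi n h p f B)"
  by (rule ext) (rule Phi_psmult)
lemma Phi_pz_fun: "Phi n h pz f = (\<lambda>B. 0)"
  by (rule ext) (rule Phi_pz)
lemma Phi_punit_fun: "Phi n h punit f = f"
  by (rule ext) (rule Phi_punit)
lemma Phi_psum_fun: "finite S \<Longrightarrow> (\<And>k. k \<in> S \<Longrightarrow> F k \<in> P n) \<Longrightarrow>
   Phi n h (psum S F) f = (\<lambda>B. \<Sum>k\<in>S. Phi n h (F k) f B)"
  by (rule ext) (rule Phi_psum)

lemmas Phi_simps = Phi_wick_fun Phi_padd_fun Phi_psmult_fun Phi_pz_fun Phi_punit_fun Phi_psum_fun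
  Phi_fadd Phi_fmult Phi_fsum Phi_fzero

locale wk =
  fixes n :: nat and h :: real
  assumes hpos: "h > 0"
begin

abbreviation W (infixl "\<star>" 70) where "p \<star> q \<equiv> wick n h p q"

lemma inj: "p \<in> P n \<Longrightarrow> q \<in> P n \<Longrightarrow> (\<And>f A. Phi n h p f A = Phi n h q f A) \<Longrightarrow> p = q"
  using Phi_inj hpos by blast

lemma assoc: "p \<in> P n \<Longrightarrow> q \<in> P n \<Longrightarrow> r \<in> P n \<Longrightarrow> (p \<star> q) \<star> r = p \<star> (q \<star> r)"
  by (rule inj) (simp_all add: Phi_simps)
lemma wick_padd_l: "p \<in> P n \<Longrightarrow> q \<in> P n \<Longrightarrow> r \<in> P n \<Longrightarrow> padd p q \<star> r = padd (p \<star> r) (q \<star> r)"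
  by (rule inj) (simp_all add: Phi_simps)
lemma wick_padd_r: "p \<in> P n \<Longrightarrow> q \<in> P n \<Longrightarrow> r \<in> P n \<Longrightarrow> r \<star> padd p q = padd (r \<star> p) (r \<star> q)"
  by (rule inj) (simp_all add: Phi_simps)
lemma wick_psmult_l: "p \<in> P n \<Longrightarrow> q \<in> P n \<Longrightarrow> psmult x p \<star> q = psmult x (p \<star> q)"
  by (rule inj) (simp_all add: Phi_simps)
lemma wick_psmult_r: "p \<in> P n \<Longrightarrow> q \<in> P n \<Longrightarrow> p \<star> psmult x q = psmult x (p \<star> q)"
  by (rule inj) (simp_all add: Phi_simps)
lemma wick_unit_l: "p \<in> P n \<Longrightarrow> punit \<star> p = p"
  by (rule inj) (simp_all add: Phi_simps)
lemma wick_unit_r: "p \<in> P n \<Longrightarrow> p \<star> punit = p"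
  by (rule inj) (simp_all add: Phi_simps)
lemma wick_pz_l: "p \<in> P n \<Longrightarrow> pz \<star> p = pz"
  by (rule inj) (simp_all add: Phi_simps)
lemma wick_pz_r: "p \<in> P n \<Longrightarrow> p \<star> pz = pz"
  by (rule inj) (simp_all add: Phi_simps)
lemma wick_psum_l: "finite S \<Longrightarrow> (\<And>k. k \<in> S \<Longrightarrow> F k \<in> P n) \<Longrightarrow> r \<in> P n \<Longrightarrow>
   psum S F \<star> r = psum S (\<lambda>k. F k \<star> r)"
  by (rule inj) (simp_all add: Phi_simps)
lemma wick_psum_r: "finite S \<Longrightarrow> (\<And>k. k \<in> S \<Longrightarrow> F k \<in> P n) \<Longrightarrow> r \<in> P n \<Longrightarrow>
   r \<star> psum S F = psum S (\<lambda>k. r \<star> F k)"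
  by (rule inj) (simp_all add: Phi_simps)

end


lemma supp_pstar: "supp (pstar p) = prod.swap ` supp p"
  by (auto simp: supp_def pstar_def image_iff)

lemma pstar_P[simp]: "p \<in> P n \<Longrightarrow> pstar p \<in> P n"
  by (auto simp: P_def supp_pstar)

lemma pstar_pstar[simp]: "pstar (pstar p) = p"
  by (simp add: pstar_def)

lemma pstar_padd: "pstar (padd p q) = padd (pstar p) (pstar q)"
  by (simp add: pstar_def padd_def fun_eq_iff)
lemma pstar_psmult: "pstar (psmult x p) = psmult (cnj x) (pstar p)"
  by (simp add: pstar_def psmult_def fun_eq_iff)
lemma pstar_punit[simp]: "pstar punit = punit"
  by (auto simp: pstar_def punit_def fun_eq_iff)
lemma pstar_pz[simp]: "pstar pz = pz"
  by (simp add: pstar_def pz_def fun_eq_iff)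
lemma pstar_psum: "pstar (psum S F) = psum S (\<lambda>k. pstar (F k))"
  by (simp add: pstar_def psum_def fun_eq_iff)

lemma cnj_coef: "cnj (coef n h a b M) = coef n h a b M"
  by (simp add: coef_def mfact_def dfactor_def)

lemma pstar_wick:
  assumes p: "p \<in> P n" and q: "q \<in> P n"
  shows "pstar (wick n h p q) = wick n h (pstar q) (pstar p)"
proof (rule ext, clarify)
  fix K L
  have inj: "inj_on prod.swap X" for X :: "(midx \<times> midx) set" by (metis inj_on_def swap_swap)
  have "wick n h (pstar q) (pstar p) (K, L) =
    (\<Sum>b\<in>supp q. \<Sum>a\<in>supp p. \<Sum>M\<in>Ms n (prod.swap b) (prod.swap a).
       if (K, L) = idx (prod.swap b) (prod.swap a) M then pstar q (prod.swap b) * pstar p (prod.swap a) *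
          coef n h (prod.swap b) (prod.swap a) M else 0)"
    unfolding wick_alt supp_pstar by (simp add: sum.reindex[OF inj])
  also have "\<dots> = (\<Sum>a\<in>supp p. \<Sum>b\<in>supp q. \<Sum>M\<in>Ms n (prod.swap b) (prod.swap a).
       if (K, L) = idx (prod.swap b) (prod.swap a) M then pstar q (prod.swap b) * pstar p (prod.swap a) *
          coef n h (prod.swap b) (prod.swap a) M else 0)"
    by (rule sum.swap)
  also have "\<dots> = (\<Sum>a\<in>supp p. \<Sum>b\<in>supp q. \<Sum>M\<in>Ms n a b.
       if (L, K) = idx a b M then cnj (p a * q b * coef n h a b M) else 0)"
  proof (rule sum.cong[OF refl], rule sum.cong[OF refl])
    fix a b :: "midx \<times> midx"
    obtain Ka La where aa: "a = (Ka, La)" by fastforce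
    obtain Kb Lb where bb: "b = (Kb, Lb)" by fastforce
    have Ms: "Ms n (prod.swap b) (prod.swap a) = Ms n a b" by (auto simp: Ms_def aa bb)
    show "(\<Sum>M\<in>Ms n (prod.swap b) (prod.swap a).
       if (K, L) = idx (prod.swap b) (prod.swap a) M then pstar q (prod.swap b) * pstar p (prod.swap a) *
          coef n h (prod.swap b) (prod.swap a) M else 0) =
       (\<Sum>M\<in>Ms n a b. if (L, K) = idx a b M then cnj (p a * q b * coef n h a b M) else 0)"
      unfolding Ms
    proof (rule sum.cong[OF refl])
      fix M assume M: "M \<in> Ms n a b"
      have e: "((K, L) = idx (prod.swap b) (prod.swap a) M) = ((L, K) = idx a b M)"
      proof -
        have "(\<lambda>i. Lb i + La i - M i) = (\<lambda>i. La i - M i + Lb i)"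
             "(\<lambda>i. Kb i - M i + Ka i) = (\<lambda>i. Ka i + Kb i - M i)"
          using M by (auto simp: Ms_def aa bb fun_eq_iff)
        then show ?thesis by (auto simp: idx_def aa bb)
      qed
      have c: "coef n h (prod.swap b) (prod.swap a) M = coef n h a b M"
        by (simp add: coef_def aa bb)
      show "(if (K, L) = idx (prod.swap b) (prod.swap a) M then pstar q (prod.swap b) * pstar p (prod.swap a) *
          coef n h (prod.swap b) (prod.swap a) M else 0) = (if (L, K) = idx a b M then cnj (p a * q b * coef n h a b M) else 0)"
        unfolding e c by (simp add: pstar_def aa bb cnj_coef)
    qed
  qed
  also have "\<dots> = pstar (wick n h p q) (K, L)"
    unfolding pstar_def wick_alt by (simp add: if_distrib[of cnj] cong: if_cong)
  finally show "pstar (wick n h p q) (K, L) = wick n h (pstar q) (pstar p) (K, L)" ..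
qed



definition mon :: "midx \<times> midx \<Rightarrow> bpoly" where "mon c = (\<lambda>x. if x = c then 1 else 0)"
definition z0 :: midx where "z0 = (\<lambda>_. 0)"
definition zl :: "nat \<Rightarrow> bpoly" where "zl j = mon (unitidx j, z0)"
definition zbl :: "nat \<Rightarrow> bpoly" where "zbl j = mon (z0, unitidx j)"

lemma supp_mon: "supp (mon c) = {c}" by (auto simp: supp_def mon_def)
lemma mon_P: "idx_ok n (fst c) \<Longrightarrow> idx_ok n (snd c) \<Longrightarrow> mon c \<in> P n"
  by (simp add: P_def supp_mon)
lemma Phi_mon: "Phi n h (mon c) f A = phm n h c f A"
  unfolding Phi_def supp_mon by (simp add: mon_def)
lemma Phi_mon_fun: "Phi n h (mon c) f = phm n h c f"
  by (rule ext) (rule Phi_mon)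
lemma ok_unitidx: "j \<le> n \<Longrightarrow> idx_ok n (unitidx j)" by (simp add: idx_ok_def unitidx_def)
lemma ok_z0: "idx_ok n z0" by (simp add: idx_ok_def z0_def)
lemma zl_P[simp]: "j \<le> n \<Longrightarrow> zl j \<in> P n" by (simp add: zl_def mon_P ok_unitidx ok_z0)
lemma zbl_P[simp]: "j \<le> n \<Longrightarrow> zbl j \<in> P n" by (simp add: zbl_def mon_P ok_unitidx ok_z0)
lemma punit_mon: "punit = mon (z0, z0)" by (auto simp: punit_def mon_def z0_def fun_eq_iff)
lemma pstar_mon: "pstar (mon c) = mon (prod.swap c)" by (cases c) (auto simp: pstar_def mon_def fun_eq_iff)
lemma pstar_zl[simp]: "pstar (zl j) = zbl j" by (simp add: zl_def zbl_def pstar_mon)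
lemma pstar_zbl[simp]: "pstar (zbl j) = zl j" by (simp add: zl_def zbl_def pstar_mon)

lemma unitidx_inj: "unitidx i = unitidx j \<Longrightarrow> i = j"
  by (metis unitidx_def zero_neq_one)

lemma Jpoly_eq: "Jpoly n = psum {..n} (\<lambda>j. mon (unitidx j, unitidx j))"
proof (rule ext, clarify)
  fix K L
  show "Jpoly n (K, L) = psum {..n} (\<lambda>j. mon (unitidx j, unitidx j)) (K, L)"
  proof (cases "\<exists>j\<le>n. K = unitidx j \<and> L = unitidx j")
    case True
    then obtain j where j: "j \<le> n" "K = unitidx j" "L = unitidx j" by blast
    have "psum {..n} (\<lambda>j. mon (unitidx j, unitidx j)) (K, L) = (\<Sum>k\<le>n. if k = j then 1 else 0)"
      unfolding psum_def mon_def using j by (intro sum.cong refl) (auto dest: unitidx_inj)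
    then show ?thesis using True j by (simp add: Jpoly_def)
  next
    case False
    then have "\<forall>k\<in>{..n}. mon (unitidx k, unitidx k) (K, L) = 0" by (auto simp: mon_def)
    then have "psum {..n} (\<lambda>j. mon (unitidx j, unitidx j)) (K, L) = 0"
      unfolding psum_def by (rule sum.neutral)
    then show ?thesis using False by (simp add: Jpoly_def)
  qed
qed

lemma J_P[simp]: "Jpoly n \<in> P n"
  unfolding Jpoly_eq by (rule psum_P) (auto intro!: mon_P simp: ok_unitidx)

lemma mdeg_unitidx: "j \<le> n \<Longrightarrow> mdeg n (unitidx j) = 1"
  by (simp add: mdeg_def unitidx_def)
lemma mdeg_z0: "mdeg n z0 = 0" by (simp add: mdeg_def z0_def)
lemma mdeg_zero[simp]: "mdeg n (\<lambda>_. 0) = 0" by (simp add: mdeg_def)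

lemma prod_unit_ratio:
  fixes n j :: nat
  assumes "j \<le> n"
  shows "(\<Prod>i\<le>n. (if i = j then x else 1)) = (x :: complex)"
proof -
  have "(\<Prod>i\<le>n. (if i = j then x else 1)) = (if j = j then x else 1) * (\<Prod>i\<in>{..n}-{j}. (if i = j then x else 1))"
    by (rule prod.remove) (use assms in simp_all)
  also have "(\<Prod>i\<in>{..n}-{j}. (if i = j then x else 1)) = 1" by (rule prod.neutral) auto
  finally show ?thesis by simp
qed

lemma phm_zl: "j \<le> n \<Longrightarrow> phm n h (unitidx j, z0) f A = (if 1 \<le> A j then f (\<lambda>k. A k - unitidx j k) else 0)"
proof -
  assume j: "j \<le> n"
  have c: "cnd n (unitidx j) A = (1 \<le> A j)" using j by (auto simp: cnd_def unitidx_def)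
  have p: "(\<Prod>i\<le>n. fact (A i - unitidx j i + z0 i) / fact (A i - unitidx j i)) = (1::complex)"
    by (simp add: z0_def)
  show ?thesis unfolding phm_def wgt_def fst_conv snd_conv c p shiftA_def by (simp add: mdeg_z0 z0_def)
qed

lemma phm_zbl: "j \<le> n \<Longrightarrow> phm n h (z0, unitidx j) f A = of_real h * of_nat (A j + 1) * f (\<lambda>k. A k + unitidx j k)"
proof -
  assume j: "j \<le> n"
  have c: "cnd n z0 A" by (simp add: cnd_def z0_def)
  have p: "(\<Prod>i\<le>n. fact (A i - z0 i + unitidx j i) / fact (A i - z0 i)) = (of_nat (A j + 1)::complex)"
  proof -
    have "(\<Prod>i\<le>n. fact (A i - z0 i + unitidx j i) / fact (A i - z0 i)) = (\<Prod>i\<le>n. (if i = j then of_nat (A j + 1) else 1 :: complex))"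
      by (intro prod.cong refl) (auto simp: z0_def unitidx_def fact_Suc)
    then show ?thesis using prod_unit_ratio[OF j] by simp
  qed
  show ?thesis unfolding phm_def wgt_def fst_conv snd_conv p shiftA_def using c j
    by (simp add: mdeg_unitidx z0_def)
qed

lemma phm_E: "j \<le> n \<Longrightarrow> phm n h (unitidx j, unitidx j) f A = of_real h * of_nat (A j) * f A"
proof -
  assume j: "j \<le> n"
  show ?thesis
  proof (cases "1 \<le> A j")
    case True
    have c: "cnd n (unitidx j) A" using j True by (auto simp: cnd_def unitidx_def)
    have s: "(\<lambda>i. A i - unitidx j i + unitidx j i) = A" using True by (auto simp: unitidx_def fun_eq_iff)
    have p: "(\<Prod>i\<le>n. fact (A i - unitidx j i + unitidx j i) / fact (A i - unitidx j i)) = (of_nat (A j)::complex)"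
    proof -
      have "(\<Prod>i\<le>n. fact (A i - unitidx j i + unitidx j i) / fact (A i - unitidx j i)) = (\<Prod>i\<le>n. (if i = j then of_nat (A j) else 1 :: complex))"
        using True by (intro prod.cong refl) (auto simp: unitidx_def fact_reduce)
      then show ?thesis using prod_unit_ratio[OF j] by simp
    qed
    show ?thesis unfolding phm_def wgt_def fst_conv snd_conv p shiftA_def s using c j
      by (simp add: mdeg_unitidx)
  next
    case False
    have c: "\<not> cnd n (unitidx j) A" using j False by (auto simp: cnd_def unitidx_def)
    show ?thesis unfolding phm_def wgt_def using c False by simp
  qed
qed

lemma Phi_J: "Phi n h (Jpoly n) f A = of_real h * of_nat (mdeg n A) * f A"
proof -
  have "Phi n h (Jpoly n) f A = (\<Sum>j\<le>n. of_real h * of_nat (A j) * f A)"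
    unfolding Jpoly_eq by (subst Phi_psum) (auto intro!: mon_P simp: ok_unitidx Phi_mon phm_E)
  also have "\<dots> = of_real h * of_nat (mdeg n A) * f A"
    by (simp add: mdeg_def sum_distrib_left sum_distrib_right)
  finally show ?thesis .
qed
lemma Phi_J_fun: "Phi n h (Jpoly n) f = (\<lambda>A. of_real h * of_nat (mdeg n A) * f A)"
  by (rule ext) (rule Phi_J)



lemma ue1: "1 \<le> A j \<Longrightarrow> (\<lambda>k. A k + unitidx i k - unitidx j k) = (\<lambda>k. A k - unitidx j k + unitidx i k)"
  by (auto simp: unitidx_def fun_eq_iff)
lemma ue2: "(\<lambda>k. A k + unitidx i k - unitidx i k) = A"
  by (auto simp: fun_eq_iff)
lemma ue3: "1 \<le> A j \<Longrightarrow> (\<lambda>k. A k - unitidx j k + unitidx j k) = A"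
  by (auto simp: unitidx_def fun_eq_iff)
lemma ue4: "(\<lambda>k. A k - unitidx i k - unitidx j k) = (\<lambda>k. A k - unitidx j k - unitidx i k)"
  by (auto simp: fun_eq_iff)
lemma ue5: "(\<lambda>k. A k + unitidx i k + unitidx j k) = (\<lambda>k. A k + unitidx j k + unitidx i k)"
  by (auto simp: fun_eq_iff)

lemma Phi_zl_fun: "j \<le> n \<Longrightarrow> Phi n h (zl j) f = (\<lambda>A. if 1 \<le> A j then f (\<lambda>k. A k - unitidx j k) else 0)"
  by (rule ext) (simp add: zl_def Phi_mon phm_zl)
lemma Phi_zbl_fun: "j \<le> n \<Longrightarrow> Phi n h (zbl j) f = (\<lambda>A. of_real h * of_nat (A j + 1) * f (\<lambda>k. A k + unitidx j k))"
  by (rule ext) (simp add: zbl_def Phi_mon phm_zbl)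
lemma Phi_E_fun: "j \<le> n \<Longrightarrow> Phi n h (mon (unitidx j, unitidx j)) f = (\<lambda>A. of_real h * of_nat (A j) * f A)"
  by (rule ext) (simp add: Phi_mon phm_E)
lemma ue6: "(\<lambda>k. A k - (unitidx i k + unitidx j k)) = (\<lambda>k. A k - (unitidx j k + unitidx i k))"
  by (auto simp: fun_eq_iff)
lemma ue7: "1 \<le> A j \<Longrightarrow> (\<lambda>k. unitidx j k + (A k - unitidx j k)) = A"
  by (auto simp: unitidx_def fun_eq_iff)
lemma uj: "unitidx j j = 1" "i \<noteq> j \<Longrightarrow> unitidx i j = 0" by (auto simp: unitidx_def)

context wk begin

lemma comm_zbl_zl:
  assumes i: "i \<le> n" and j: "j \<le> n"
  shows "zbl i \<star> zl j = padd (zl j \<star> zbl i) (psmult (if i = j then of_real h else 0) punit)"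
proof (rule inj)
  fix f A
  show "Phi n h (zbl i \<star> zl j) f A = Phi n h (padd (zl j \<star> zbl i) (psmult (if i = j then of_real h else 0) punit)) f A"
  proof (cases "i = j")
    case True
    then show ?thesis using i j
      by (cases "1 \<le> A j") (simp_all add: Phi_simps Phi_zl_fun Phi_zbl_fun ue2 ue3 ue7 uj algebra_simps of_nat_diff)
  next
    case False
    then show ?thesis using i j
      by (cases "1 \<le> A j") (simp_all add: Phi_simps Phi_zl_fun Phi_zbl_fun ue1 uj)
  qed
qed (use assms in simp_all)

lemma comm_zl_zl:
  assumes i: "i \<le> n" and j: "j \<le> n"
  shows "zl i \<star> zl j = zl j \<star> zl i"
proof (rule inj)
  fix f A
  show "Phi n h (zl i \<star> zl j) f A = Phi n h (zl j \<star> zl i) f A"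
    using i j by (cases "i = j") (auto simp add: Phi_simps Phi_zl_fun ue4 ue6 uj)
qed (use assms in simp_all)

lemma comm_zbl_zbl:
  assumes i: "i \<le> n" and j: "j \<le> n"
  shows "zbl i \<star> zbl j = zbl j \<star> zbl i"
proof (rule inj)
  fix f A
  show "Phi n h (zbl i \<star> zbl j) f A = Phi n h (zbl j \<star> zbl i) f A"
    using i j by (cases "i = j") (simp_all add: Phi_simps Phi_zbl_fun ue5 uj algebra_simps)
qed (use assms in simp_all)

lemma zl_zbl_E:
  assumes j: "j \<le> n"
  shows "zl j \<star> zbl j = mon (unitidx j, unitidx j)"
proof (rule inj)
  fix f A
  show "Phi n h (zl j \<star> zbl j) f A = Phi n h (mon (unitidx j, unitidx j)) f A"
    using j by (cases "1 \<le> A j") (simp_all add: Phi_simps Phi_zl_fun Phi_zbl_fun Phi_E_fun ue3 uj of_nat_diff)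
qed (use assms in \<open>simp_all add: mon_P ok_unitidx\<close>)

lemma J_eq: "Jpoly n = psum {..n} (\<lambda>j. zl j \<star> zbl j)"
  unfolding Jpoly_eq psum_def by (rule ext) (rule sum.cong, simp_all add: zl_zbl_E)

end


definition Hd :: "nat \<Rightarrow> int \<Rightarrow> bpoly \<Rightarrow> bool" where
  "Hd n d p \<longleftrightarrow> (\<forall>c\<in>supp p. int (mdeg n (snd c)) = int (mdeg n (fst c)) + d)"

lemma mdeg_add_sub2:
  assumes "\<forall>i. M i \<le> Kb i"
  shows "mdeg n M + mdeg n (\<lambda>i. Ka i + Kb i - M i) = mdeg n Ka + mdeg n Kb"
proof -
  have e: "M i + (Ka i + Kb i - M i) = Ka i + Kb i" for i using assms[rule_format, of i] by simp
  show ?thesis unfolding mdeg_def sum.distrib[symmetric] by (rule sum.cong[OF refl]) (rule e)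
qed

lemma Hd_wick:
  assumes hp: "Hd n d1 p" and hq: "Hd n d2 q"
  shows "Hd n (d1 + d2) (wick n h p q)"
  unfolding Hd_def
proof
  fix c assume "c \<in> supp (wick n h p q)"
  then have "c \<in> WS n p q" using supp_wick by blast
  then obtain a b M where a: "a \<in> supp p" and b: "b \<in> supp q" and M: "M \<in> Ms n a b" and e: "c = idx a b M"
    unfolding WS_def by blast
  have "\<forall>i. M i \<le> snd a i" "\<forall>i. M i \<le> fst b i" using M by (auto simp: Ms_def)
  from mdeg_add_sub[OF this(1), of n "snd b"] mdeg_add_sub2[OF this(2), of n "fst a"]
  have 1: "mdeg n M + mdeg n (snd c) = mdeg n (snd a) + mdeg n (snd b)"
   and 2: "mdeg n M + mdeg n (fst c) = mdeg n (fst a) + mdeg n (fst b)" by (simp_all add: e idx_def)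
  have 3: "int (mdeg n (snd a)) = int (mdeg n (fst a)) + d1" using hp a by (simp add: Hd_def)
  have 4: "int (mdeg n (snd b)) = int (mdeg n (fst b)) + d2" using hq b by (simp add: Hd_def)
  show "int (mdeg n (snd c)) = int (mdeg n (fst c)) + (d1 + d2)" using 1 2 3 4 by linarith
qed

lemma Hd_padd: "Hd n d p \<Longrightarrow> Hd n d q \<Longrightarrow> Hd n d (padd p q)"
  unfolding Hd_def using supp_lc[of 1 p 1 q] by (auto simp: padd_lc)
lemma Hd_psmult: "Hd n d p \<Longrightarrow> Hd n d (psmult x p)"
  unfolding Hd_def using supp_lc[of x p 0 p] by (auto simp: psmult_lc)
lemma Hd_psum: "(\<And>k. k \<in> S \<Longrightarrow> Hd n d (F k)) \<Longrightarrow> Hd n d (psum S F)"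
  unfolding Hd_def using supp_psum[of S F] by blast
lemma Hd_pz: "Hd n d pz" by (simp add: Hd_def pz_def supp_def)
lemma Hd_mon: "int (mdeg n (snd c)) = int (mdeg n (fst c)) + d \<Longrightarrow> Hd n d (mon c)"
  by (simp add: Hd_def supp_mon)
lemma Hd_punit: "Hd n 0 punit" by (simp add: punit_mon Hd_mon)
lemma Hd_zl: "j \<le> n \<Longrightarrow> Hd n (-1) (zl j)" by (simp add: zl_def Hd_mon mdeg_unitidx mdeg_z0)
lemma Hd_zbl: "j \<le> n \<Longrightarrow> Hd n 1 (zbl j)" by (simp add: zbl_def Hd_mon mdeg_unitidx mdeg_z0)
lemma Hd_J: "Hd n 0 (Jpoly n)" unfolding Jpoly_eq by (rule Hd_psum) (simp add: Hd_mon)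
lemma Hd_pstar: "Hd n d p \<Longrightarrow> Hd n (-d) (pstar p)"
  by (auto simp: Hd_def supp_pstar)

lemma Balg_iff: "p \<in> Balg n \<longleftrightarrow> p \<in> P n \<and> Hd n 0 p"
  by (auto simp: Balg_def P_def Hd_def supp_def)

lemma mdeg_shift:
  assumes "cnd n K A"
  shows "mdeg n (shiftA K L A) + mdeg n K = mdeg n A + mdeg n L"
proof -
  have e: "(A i - K i + L i) + K i = A i + L i" if "i \<le> n" for i
  proof -
    have "K i \<le> A i" using assms that by (simp add: cnd_def)
    then show ?thesis by simp
  qed
  show ?thesis unfolding mdeg_def shiftA_def sum.distrib[symmetric] by (rule sum.cong[OF refl]) (simp add: e)
qed

context wk begin

lemma comm_J:
  assumes p: "p \<in> P n" and hd: "Hd n d p"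
  shows "p \<star> Jpoly n = padd (Jpoly n \<star> p) (psmult (of_int d * of_real h) p)"
proof (rule inj)
  fix f A
  have key: "p c * phm n h c (\<lambda>B. of_real h * of_nat (mdeg n B) * f B) A
      = of_real h * (of_nat (mdeg n A) + of_int d) * (p c * phm n h c f A)" if c: "c \<in> supp p" for c
  proof (cases "cnd n (fst c) A")
    case True
    have "int (mdeg n (shiftA (fst c) (snd c) A)) = int (mdeg n A) + d"
      using mdeg_shift[OF True, of "snd c"] hd c unfolding Hd_def by auto
    then have "(of_nat (mdeg n (shiftA (fst c) (snd c) A)) :: complex) = of_nat (mdeg n A) + of_int d"
      by (metis of_int_add of_int_of_nat_eq)
    then show ?thesis unfolding phm_def by (simp add: algebra_simps)
  next
    case False
    then show ?thesis by (simp add: phm_def wgt_def)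
  qed
  have "Phi n h (p \<star> Jpoly n) f A = (\<Sum>c\<in>supp p. of_real h * (of_nat (mdeg n A) + of_int d) * (p c * phm n h c f A))"
    using p by (simp add: Phi_wick_fun Phi_J_fun Phi_def key)
  also have "\<dots> = of_real h * (of_nat (mdeg n A) + of_int d) * Phi n h p f A"
    by (simp add: Phi_def sum_distrib_left)
  finally show "Phi n h (p \<star> Jpoly n) f A = Phi n h (padd (Jpoly n \<star> p) (psmult (of_int d * of_real h) p)) f A"
    using p by (simp add: Phi_simps Phi_J_fun algebra_simps)
qed (use assms in simp_all)

end


lemma Balg_P: "p \<in> Balg n \<Longrightarrow> p \<in> P n" by (simp add: Balg_iff)
lemma Balg_Hd: "p \<in> Balg n \<Longrightarrow> Hd n 0 p" by (simp add: Balg_iff)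

lemma psum_padd: "psum S (\<lambda>k. padd (F k) (G k)) = padd (psum S F) (psum S G)"
  by (simp add: psum_def padd_def sum.distrib fun_eq_iff)
lemma psmult_psum: "psmult x (psum S F) = psum S (\<lambda>k. psmult x (F k))"
  by (simp add: psum_def psmult_def sum_distrib_left fun_eq_iff)
lemma psum_insert: "finite S \<Longrightarrow> k \<notin> S \<Longrightarrow> psum (insert k S) F = padd (F k) (psum S F)"
  by (simp add: psum_def padd_def fun_eq_iff)
lemma psmult_psmult: "psmult x (psmult y p) = psmult (x * y) p"
  by (simp add: psmult_def fun_eq_iff)
lemma psum_empty: "psum {} F = pz" by (simp add: psum_def pz_def fun_eq_iff)

context wk begin

lemma Balg_wick[simp]: "p \<in> Balg n \<Longrightarrow> q \<in> Balg n \<Longrightarrow> p \<star> q \<in> Balg n"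
  using Hd_wick[of n 0 p 0 q h] by (simp add: Balg_iff)
lemma Balg_padd[simp]: "p \<in> Balg n \<Longrightarrow> q \<in> Balg n \<Longrightarrow> padd p q \<in> Balg n"
  by (simp add: Balg_iff Hd_padd)
lemma Balg_psmult[simp]: "p \<in> Balg n \<Longrightarrow> psmult x p \<in> Balg n"
  by (simp add: Balg_iff Hd_psmult)
lemma Balg_pstar[simp]: "p \<in> Balg n \<Longrightarrow> pstar p \<in> Balg n"
  using Hd_pstar[of n 0 p] by (simp add: Balg_iff)
lemma Balg_psum[simp]: "finite S \<Longrightarrow> (\<And>k. k \<in> S \<Longrightarrow> F k \<in> Balg n) \<Longrightarrow> psum S F \<in> Balg n"
  by (simp add: Balg_iff Hd_psum)
lemma Balg_punit[simp]: "punit \<in> Balg n" by (simp add: Balg_iff Hd_punit)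
lemma Balg_J[simp]: "Jpoly n \<in> Balg n" by (simp add: Balg_iff Hd_J)
lemma Balg_pz[simp]: "pz \<in> Balg n" by (simp add: Balg_iff Hd_pz)
lemma Balg_zl_zbl[simp]:
  assumes "p \<in> Balg n" "i \<le> n" "j \<le> n" shows "(zl j \<star> p) \<star> zbl i \<in> Balg n"
proof -
  have "Hd n (-1 + 0) (zl j \<star> p)" by (rule Hd_wick[OF Hd_zl Balg_Hd]) (use assms in auto)
  then have "Hd n (-1 + 0 + 1) ((zl j \<star> p) \<star> zbl i)" by (rule Hd_wick[OF _ Hd_zbl]) (use assms in auto)
  then show ?thesis using assms by (simp add: Balg_iff Balg_P)
qed
lemma Balg_zbl_zl[simp]:
  assumes "p \<in> Balg n" "i \<le> n" "j \<le> n" shows "(zbl j \<star> p) \<star> zl i \<in> Balg n"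
proof -
  have "Hd n (1 + 0) (zbl j \<star> p)" by (rule Hd_wick[OF Hd_zbl Balg_Hd]) (use assms in auto)
  then have "Hd n (1 + 0 + -1) ((zbl j \<star> p) \<star> zl i)" by (rule Hd_wick[OF _ Hd_zl]) (use assms in auto)
  then show ?thesis using assms by (simp add: Balg_iff Balg_P)
qed

definition cone where "cone = poscone n h"

lemma cone_psum_form: "cone = {x. \<exists>(m::nat) g. (\<forall>j<m. g j \<in> Balg n) \<and> x = psum {..<m} (\<lambda>j. pstar (g j) \<star> g j)}"
  by (simp add: cone_def poscone_def psum_def)

lemma cone_pz: "pz \<in> cone"
  unfolding cone_psum_form by (auto simp: psum_empty intro!: exI[of _ 0])

lemma cone_sq: "g \<in> Balg n \<Longrightarrow> pstar g \<star> g \<in> cone"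
  unfolding cone_psum_form
  by (rule CollectI, rule exI[of _ 1], rule exI[of _ "\<lambda>_. g"]) (simp add: psum_def fun_eq_iff)

lemma psum_lessThan_add: fixes m1 m2 :: nat shows "psum {..<m1 + m2} F = padd (psum {..<m1} F) (psum {..<m2} (\<lambda>j. F (m1 + j)))"
proof (induction m2)
  case 0 then show ?case by (simp add: psum_def padd_def fun_eq_iff)
next
  case (Suc m2)
  then show ?case by (simp add: psum_def padd_def fun_eq_iff)
qed

lemma cone_add: "x \<in> cone \<Longrightarrow> y \<in> cone \<Longrightarrow> padd x y \<in> cone"
proof -
  assume "x \<in> cone" "y \<in> cone"
  then obtain m1 :: nat and g1 and m2 :: nat and g2 where g1: "\<forall>j<m1. g1 j \<in> Balg n" "x = psum {..<m1} (\<lambda>j. pstar (g1 j) \<star> g1 j)"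
    and g2: "\<forall>j<m2. g2 j \<in> Balg n" "y = psum {..<m2} (\<lambda>j. pstar (g2 j) \<star> g2 j)"
    unfolding cone_psum_form by blast
  define g where "g j = (if j < m1 then g1 j else g2 (j - m1))" for j
  have "\<forall>j<m1 + m2. g j \<in> Balg n" using g1 g2 by (auto simp: g_def)
  moreover have "padd x y = psum {..<m1 + m2} (\<lambda>j. pstar (g j) \<star> g j)"
    unfolding psum_lessThan_add g1(2) g2(2) by (simp add: g_def psum_def fun_eq_iff)
  ultimately show ?thesis unfolding cone_psum_form by blast
qed

lemma cone_psum: "finite S \<Longrightarrow> (\<And>k. k \<in> S \<Longrightarrow> F k \<in> cone) \<Longrightarrow> psum S F \<in> cone"
proof (induction S rule: finite_induct)
  case empty then show ?case by (simp add: psum_empty cone_pz)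
next
  case (insert k S) then show ?case by (simp add: psum_insert cone_add)
qed

lemma cone_scale:
  assumes x: "x \<in> cone" and r: "r \<ge> 0"
  shows "psmult (of_real r) x \<in> cone"
proof -
  obtain m :: nat and g where g: "\<forall>j<m. g j \<in> Balg n" "x = psum {..<m} (\<lambda>j. pstar (g j) \<star> g j)"
    using x unfolding cone_psum_form by blast
  define g' where "g' j = psmult (of_real (sqrt r)) (g j)" for j
  have "pstar (g' j) \<star> g' j = psmult (of_real r) (pstar (g j) \<star> g j)" if "j < m" for j
  proof -
    have gP: "g j \<in> P n" using g that by (simp add: Balg_P)
    have "pstar (g' j) \<star> g' j = psmult (of_real (sqrt r) * of_real (sqrt r)) (pstar (g j) \<star> g j)"
      using gP by (simp add: g'_def pstar_psmult wick_psmult_l wick_psmult_r psmult_psmult)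
    also have "of_real (sqrt r) * of_real (sqrt r) = (of_real r :: complex)"
    proof -
      have "sqrt r * sqrt r = r" using r by simp
      then show ?thesis by (metis of_real_mult)
    qed
    finally show ?thesis .
  qed
  then have "psum {..<m} (\<lambda>j. psmult (of_real r) (pstar (g j) \<star> g j)) = psum {..<m} (\<lambda>j. pstar (g' j) \<star> g' j)"
    unfolding psum_def by (intro ext sum.cong refl) simp
  then have "psmult (of_real r) x = psum {..<m} (\<lambda>j. pstar (g' j) \<star> g' j)"
    unfolding g(2) psmult_psum .
  moreover have "\<forall>j<m. g' j \<in> Balg n" using g by (simp add: g'_def)
  ultimately show ?thesis unfolding cone_psum_form by blast
qed

lemma cone_induct:
  assumes x: "x \<in> cone" and z: "Q pz"
    and step: "\<And>y g. Q y \<Longrightarrow> y \<in> cone \<Longrightarrow> g \<in> Balg n \<Longrightarrow> Q (padd y (pstar g \<star> g))"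
  shows "Q x"
proof -
  obtain m :: nat and g where g: "\<forall>j<m. g j \<in> Balg n" "x = psum {..<m} (\<lambda>j. pstar (g j) \<star> g j)"
    using x unfolding cone_psum_form by blast
  have "Q (psum {..<k} (\<lambda>j. pstar (g j) \<star> g j)) \<and> psum {..<k} (\<lambda>j. pstar (g j) \<star> g j) \<in> cone" if "k \<le> m" for k
    using that
  proof (induction k)
    case 0 then show ?case using z cone_pz by (simp add: psum_empty)
  next
    case (Suc k)
    have e: "psum {..<Suc k} (\<lambda>j. pstar (g j) \<star> g j) = padd (psum {..<k} (\<lambda>j. pstar (g j) \<star> g j)) (pstar (g k) \<star> g k)"
      by (simp add: psum_def padd_def fun_eq_iff)
    have gk: "g k \<in> Balg n" using g Suc by simp
    show ?case unfolding e using Suc gk by (auto intro!: step cone_add cone_sq)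
  qed
  then show ?thesis using g by simp
qed

lemma cone_Balg: "x \<in> cone \<Longrightarrow> x \<in> Balg n"
  by (erule cone_induct) simp_all

lemma cone_herm: "x \<in> cone \<Longrightarrow> pstar x = x"
  by (erule cone_induct) (simp_all add: pstar_padd pstar_wick Balg_P)

end


definition cst :: "complex \<Rightarrow> bpoly" where "cst c = psmult c punit"

lemma cst_P[simp]: "cst c \<in> P n" by (simp add: cst_def)

context wk begin

abbreviation J where "J \<equiv> Jpoly n"

lemma cst_Balg[simp]: "cst c \<in> Balg n" by (simp add: cst_def)

lemma psum_cong[cong]: "S = S' \<Longrightarrow> (\<And>k. k \<in> S' =simp=> F k = F' k) \<Longrightarrow> psum S F = psum S' F'"
  unfolding psum_def simp_implies_def by (intro ext sum.cong) auto
lemma psum_pz[simp]: "psum S (\<lambda>_. pz) = pz" by (simp add: psum_def pz_def)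

lemma psum_P'[simp]: "finite S \<Longrightarrow> \<forall>k\<in>S. F k \<in> P n \<Longrightarrow> psum S F \<in> P n"
  by (rule psum_P) auto
lemma Balg_psum'[simp]: "finite S \<Longrightarrow> \<forall>k\<in>S. F k \<in> Balg n \<Longrightarrow> psum S F \<in> Balg n"
  by (rule Balg_psum) auto
lemma wick_psum_l': "finite S \<Longrightarrow> \<forall>k\<in>S. F k \<in> P n \<Longrightarrow> r \<in> P n \<Longrightarrow>
   psum S F \<star> r = psum S (\<lambda>k. F k \<star> r)"
  by (rule wick_psum_l) auto
lemma wick_psum_r': "finite S \<Longrightarrow> \<forall>k\<in>S. F k \<in> P n \<Longrightarrow> r \<in> P n \<Longrightarrow>
   r \<star> psum S F = psum S (\<lambda>k. r \<star> F k)"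
  by (rule wick_psum_r) auto

lemmas Psimps = wick_P' padd_P psmult_P psum_P zl_P zbl_P J_P punit_P pstar_P Balg_P pz_P cst_P

lemmas wsimps = assoc wick_padd_l wick_padd_r wick_psmult_l wick_psmult_r wick_psum_l' wick_psum_r'
  wick_unit_l wick_unit_r pstar_wick pstar_padd pstar_psmult pstar_psum psum_padd

lemma L_A: "psum {..n} (\<lambda>j. zbl j \<star> zl j) = padd J (cst (of_nat (n + 1) * of_real h))"
proof -
  have "psum {..n} (\<lambda>j. zbl j \<star> zl j) = psum {..n} (\<lambda>j. padd (zl j \<star> zbl j) (cst (of_real h)))"
    unfolding psum_def by (intro ext sum.cong refl) (simp add: comm_zbl_zl cst_def)
  also have "\<dots> = padd J (cst (of_nat (n + 1) * of_real h))"
    unfolding psum_padd J_eq by (simp add: psum_def padd_def cst_def psmult_def fun_eq_iff)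
  finally show ?thesis .
qed

lemma L_B:
  assumes X: "X \<in> P n" and hd: "Hd n d X"
  shows "padd J (cst a) \<star> X = X \<star> padd J (cst (a - of_int d * of_real h))"
proof -
  have "X \<star> padd J (cst (a - of_int d * of_real h)) = padd (X \<star> J) (psmult (a - of_int d * of_real h) X)"
    using X by (simp add: wick_padd_r cst_def wick_psmult_r wick_unit_r)
  also have "\<dots> = padd (padd (J \<star> X) (psmult (of_int d * of_real h) X)) (psmult (a - of_int d * of_real h) X)"
    by (simp add: comm_J[OF X hd])
  also have "\<dots> = padd (J \<star> X) (psmult a X)"
    by (simp add: padd_def psmult_def fun_eq_iff algebra_simps)
  also have "\<dots> = padd J (cst a) \<star> X"
    using X by (simp add: wick_padd_l cst_def wick_psmult_l wick_unit_l)
  finally show ?thesis ..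
qed

lemma L_C1: "i \<le> n \<Longrightarrow> zl i \<star> padd J (cst a) = padd J (cst (a - of_real h)) \<star> zl i"
  using L_B[of "zl i" "-1" "a - of_real h"] by (simp add: Hd_zl)

lemma L_C2: "i \<le> n \<Longrightarrow> zbl i \<star> padd J (cst a) = padd J (cst (a + of_real h)) \<star> zbl i"
  using L_B[of "zbl i" 1 "a + of_real h"] by (simp add: Hd_zbl)

definition G :: "real \<Rightarrow> bpoly" where "G \<mu> = padd J (cst (- of_real \<mu>))"

lemma G_P[simp]: "G \<mu> \<in> P n" by (simp add: G_def)
lemma G_Balg[simp]: "G \<mu> \<in> Balg n" by (simp add: G_def)

lemma L_D: "padd J (cst a) \<star> padd J (cst b) =
   padd (cst ((of_real \<mu> + a) * (of_real \<mu> + b))) (G \<mu> \<star> padd J (cst (of_real \<mu> + a + b)))"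
  by (simp add: G_def cst_def wsimps) (simp add: padd_def psmult_def fun_eq_iff algebra_simps)

lemma J_cst0: "J = padd J (cst 0)"
  by (simp add: cst_def padd_def psmult_def fun_eq_iff)

end


context wk begin

definition Tp :: "bpoly \<Rightarrow> bpoly" where
  "Tp x = psum {..n} (\<lambda>i. (zl i \<star> x) \<star> zbl i) \<star> padd J (cst (of_nat n * of_real h))"

lemma Tp_sq:
  assumes g: "g \<in> Balg n"
  shows "Tp (pstar g \<star> g) = psum {..n} (\<lambda>i. psum {..n} (\<lambda>j. pstar ((zl j \<star> g) \<star> zbl i) \<star> ((zl j \<star> g) \<star> zbl i)))"
proof -
  have gP: "g \<in> P n" using g by (rule Balg_P)
  have step: "psum {..n} (\<lambda>j. pstar ((zl j \<star> g) \<star> zbl i) \<star> ((zl j \<star> g) \<star> zbl i))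
     = ((zl i \<star> (pstar g \<star> g)) \<star> zbl i) \<star> padd J (cst (of_nat n * of_real h))" if i: "i \<le> n" for i
  proof -
    have "psum {..n} (\<lambda>j. pstar ((zl j \<star> g) \<star> zbl i) \<star> ((zl j \<star> g) \<star> zbl i))
        = zl i \<star> (pstar g \<star> (psum {..n} (\<lambda>j. zbl j \<star> zl j) \<star> (g \<star> zbl i)))"
      using gP i by (simp add: wsimps)
    also have "\<dots> = zl i \<star> (pstar g \<star> (padd J (cst (of_nat (n + 1) * of_real h)) \<star> (g \<star> zbl i)))"
      by (simp add: L_A)
    also have "padd J (cst (of_nat (n + 1) * of_real h)) \<star> (g \<star> zbl i)
        = (g \<star> zbl i) \<star> padd J (cst (of_nat (n + 1) * of_real h - of_int 1 * of_real h))"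
    proof (rule L_B)
      show "g \<star> zbl i \<in> P n" using gP i by simp
      show "Hd n 1 (g \<star> zbl i)" using Hd_wick[OF Balg_Hd[OF g] Hd_zbl[OF i]] by simp
    qed
    also have "of_nat (n + 1) * of_real h - of_int 1 * of_real h = (of_nat n * of_real h :: complex)"
      by (simp add: algebra_simps)
    also have "zl i \<star> (pstar g \<star> ((g \<star> zbl i) \<star> padd J (cst (of_nat n * of_real h))))
        = ((zl i \<star> (pstar g \<star> g)) \<star> zbl i) \<star> padd J (cst (of_nat n * of_real h))"
      using gP i by (simp add: assoc)
    finally show ?thesis .
  qed
  have "Tp (pstar g \<star> g) = psum {..n} (\<lambda>i. ((zl i \<star> (pstar g \<star> g)) \<star> zbl i) \<star> padd J (cst (of_nat n * of_real h)))"
    unfolding Tp_def using gP by (subst wick_psum_l) simp_all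
  also have "\<dots> = psum {..n} (\<lambda>i. psum {..n} (\<lambda>j. pstar ((zl j \<star> g) \<star> zbl i) \<star> ((zl j \<star> g) \<star> zbl i)))"
    by (simp add: step)
  finally show ?thesis .
qed

lemma Tp_padd: "x \<in> P n \<Longrightarrow> y \<in> P n \<Longrightarrow> Tp (padd x y) = padd (Tp x) (Tp y)"
  unfolding Tp_def by (simp add: wsimps) (simp add: padd_def fun_eq_iff algebra_simps)
lemma Tp_psmult: "x \<in> P n \<Longrightarrow> Tp (psmult c x) = psmult c (Tp x)"
  unfolding Tp_def by (simp add: wsimps) (simp add: padd_def psmult_def psum_def sum_distrib_left fun_eq_iff algebra_simps)
lemma Tp_pz: "Tp pz = pz"
  unfolding Tp_def by (simp add: wick_pz_l wick_pz_r)
lemma Tp_P: "x \<in> P n \<Longrightarrow> Tp x \<in> P n"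
  unfolding Tp_def by simp

lemma cone_Tp: assumes x: "x \<in> cone" shows "Tp x \<in> cone"
proof (rule cone_induct[where Q = "\<lambda>x. Tp x \<in> cone", OF x])
  show "Tp pz \<in> cone" by (simp add: Tp_pz cone_pz)
next
  fix y g assume 2: "Tp y \<in> cone" "y \<in> cone" "g \<in> Balg n"
  have yP: "y \<in> P n" using cone_Balg[OF 2(2)] by (rule Balg_P)
  have "Tp (pstar g \<star> g) \<in> cone" unfolding Tp_sq[OF 2(3)]
    by (intro cone_psum cone_sq) (simp_all add: 2(3))
  then show "Tp (padd y (pstar g \<star> g)) \<in> cone" using 2 yP by (simp add: Tp_padd Balg_P cone_add)
qed

definition Good :: "real \<Rightarrow> real \<Rightarrow> bool" where
  "Good \<mu> r \<longleftrightarrow> (\<exists>c\<in>cone. \<exists>y\<in>Balg n. c = padd (cst (of_real r)) (G \<mu> \<star> y))"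

lemma Good_base: "Good \<mu> 1"
  unfolding Good_def
proof (intro bexI)
  show "punit = padd (cst (of_real 1)) (G \<mu> \<star> pz)"
    by (simp add: wick_pz_r) (simp add: cst_def padd_def psmult_def pz_def fun_eq_iff)
  show "punit \<in> cone" using cone_sq[OF Balg_punit] by (simp add: wick_unit_l)
qed simp

lemma step_pos:
  assumes "Good (\<mu> - h) r"
  shows "Good \<mu> (r * (\<mu> * (\<mu> + real n * h)))"
proof -
  obtain c y where c: "c \<in> cone" and y: "y \<in> Balg n" and e: "c = padd (cst (of_real r)) (G (\<mu> - h) \<star> y)"
    using assms unfolding Good_def by blast
  have yP: "y \<in> P n" using y by (rule Balg_P)
  define K where "K = padd J (cst (of_nat n * of_real h))"
  define Y where "Y = psum {..n} (\<lambda>i. (zl i \<star> y) \<star> zbl i)"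
  define W where "W = padd J (cst (of_real \<mu> + of_nat n * of_real h))"
  have KP: "K \<in> Balg n" "Y \<in> Balg n" "W \<in> Balg n" using y by (simp_all add: K_def Y_def W_def)
  have Tc: "Tp c \<in> cone" by (rule cone_Tp[OF c])
  have T1: "Tp punit = J \<star> K"
    unfolding Tp_def K_def by (simp add: wick_unit_r J_eq[symmetric])
  have JK: "J \<star> K = padd (cst (of_real \<mu> * (of_real \<mu> + of_nat n * of_real h))) (G \<mu> \<star> W)"
    unfolding K_def W_def using L_D[of 0 "of_nat n * of_real h" \<mu>] J_cst0 by simp
  have zG: "zl i \<star> G (\<mu> - h) = G \<mu> \<star> zl i" if "i \<le> n" for i
  proof -
    have "- of_real (\<mu> - h) - of_real h = (- of_real \<mu> :: complex)" by simp
    then show ?thesis unfolding G_def using L_C1[OF that, of "- of_real (\<mu> - h)"] by simp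
  qed
  have T2: "Tp (G (\<mu> - h) \<star> y) = G \<mu> \<star> (Y \<star> K)"
  proof -
    have "Tp (G (\<mu> - h) \<star> y) = psum {..n} (\<lambda>i. ((zl i \<star> G (\<mu> - h)) \<star> y) \<star> zbl i) \<star> K"
      unfolding Tp_def K_def using yP by (simp add: assoc)
    also have "\<dots> = psum {..n} (\<lambda>i. ((G \<mu> \<star> zl i) \<star> y) \<star> zbl i) \<star> K"
      unfolding psum_def by (intro arg_cong2[where f = "wick n h"] ext sum.cong refl) (simp_all add: zG)
    also have "\<dots> = G \<mu> \<star> (Y \<star> K)"
      unfolding Y_def K_def using yP by (simp add: wsimps)
    finally show ?thesis .
  qed
  have "Tp c = padd (psmult (of_real r) (J \<star> K)) (G \<mu> \<star> (Y \<star> K))"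
    unfolding e using yP by (simp add: Tp_padd cst_def Tp_psmult T1 T2)
  also have "\<dots> = padd (cst (of_real (r * (\<mu> * (\<mu> + real n * h))))) (G \<mu> \<star> padd (psmult (of_real r) W) (Y \<star> K))"
    unfolding JK using KP by (simp add: Balg_P wick_padd_r wick_psmult_r) (simp add: cst_def padd_def psmult_def fun_eq_iff algebra_simps)
  finally have "Tp c = padd (cst (of_real (r * (\<mu> * (\<mu> + real n * h))))) (G \<mu> \<star> padd (psmult (of_real r) W) (Y \<star> K))" .
  moreover have "padd (psmult (of_real r) W) (Y \<star> K) \<in> Balg n" using KP by simp
  ultimately show ?thesis unfolding Good_def using Tc by blast
qed

end


context wk begin

definition Tn :: "bpoly \<Rightarrow> bpoly" where
  "Tn x = psum {..n} (\<lambda>i. (zbl i \<star> x) \<star> zl i) \<star> padd J (cst (of_real h))"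

lemma Tn_sq:
  assumes g: "g \<in> Balg n"
  shows "Tn (pstar g \<star> g) = psum {..n} (\<lambda>i. psum {..n} (\<lambda>j. pstar ((zbl j \<star> g) \<star> zl i) \<star> ((zbl j \<star> g) \<star> zl i)))"
proof -
  have gP: "g \<in> P n" using g by (rule Balg_P)
  have step: "psum {..n} (\<lambda>j. pstar ((zbl j \<star> g) \<star> zl i) \<star> ((zbl j \<star> g) \<star> zl i))
     = ((zbl i \<star> (pstar g \<star> g)) \<star> zl i) \<star> padd J (cst (of_real h))" if i: "i \<le> n" for i
  proof -
    have "psum {..n} (\<lambda>j. pstar ((zbl j \<star> g) \<star> zl i) \<star> ((zbl j \<star> g) \<star> zl i))
        = zbl i \<star> (pstar g \<star> (psum {..n} (\<lambda>j. zl j \<star> zbl j) \<star> (g \<star> zl i)))"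
      using gP i by (simp add: wsimps)
    also have "\<dots> = zbl i \<star> (pstar g \<star> (padd J (cst 0) \<star> (g \<star> zl i)))"
      by (simp add: J_eq[symmetric] J_cst0[symmetric])
    also have "padd J (cst 0) \<star> (g \<star> zl i) = (g \<star> zl i) \<star> padd J (cst (0 - of_int (-1) * of_real h))"
    proof (rule L_B)
      show "g \<star> zl i \<in> P n" using gP i by simp
      show "Hd n (-1) (g \<star> zl i)" using Hd_wick[OF Balg_Hd[OF g] Hd_zl[OF i]] by simp
    qed
    also have "0 - of_int (-1) * of_real h = (of_real h :: complex)" by simp
    also have "zbl i \<star> (pstar g \<star> ((g \<star> zl i) \<star> padd J (cst (of_real h))))
        = ((zbl i \<star> (pstar g \<star> g)) \<star> zl i) \<star> padd J (cst (of_real h))"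
      using gP i by (simp add: assoc)
    finally show ?thesis .
  qed
  have "Tn (pstar g \<star> g) = psum {..n} (\<lambda>i. ((zbl i \<star> (pstar g \<star> g)) \<star> zl i) \<star> padd J (cst (of_real h)))"
    unfolding Tn_def using gP by (subst wick_psum_l) simp_all
  also have "\<dots> = psum {..n} (\<lambda>i. psum {..n} (\<lambda>j. pstar ((zbl j \<star> g) \<star> zl i) \<star> ((zbl j \<star> g) \<star> zl i)))"
    by (simp add: step)
  finally show ?thesis .
qed

lemma Tn_padd: "x \<in> P n \<Longrightarrow> y \<in> P n \<Longrightarrow> Tn (padd x y) = padd (Tn x) (Tn y)"
  unfolding Tn_def by (simp add: wsimps) (simp add: padd_def fun_eq_iff algebra_simps)
lemma Tn_psmult: "x \<in> P n \<Longrightarrow> Tn (psmult c x) = psmult c (Tn x)"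
  unfolding Tn_def by (simp add: wsimps) (simp add: padd_def psmult_def psum_def sum_distrib_left fun_eq_iff algebra_simps)
lemma Tn_pz: "Tn pz = pz"
  unfolding Tn_def by (simp add: wick_pz_l wick_pz_r)

lemma cone_Tn: assumes x: "x \<in> cone" shows "Tn x \<in> cone"
proof (rule cone_induct[where Q = "\<lambda>x. Tn x \<in> cone", OF x])
  show "Tn pz \<in> cone" by (simp add: Tn_pz cone_pz)
next
  fix y g assume 2: "Tn y \<in> cone" "y \<in> cone" "g \<in> Balg n"
  have yP: "y \<in> P n" using cone_Balg[OF 2(2)] by (rule Balg_P)
  have "Tn (pstar g \<star> g) \<in> cone" unfolding Tn_sq[OF 2(3)]
    by (intro cone_psum cone_sq) (simp_all add: 2(3))
  then show "Tn (padd y (pstar g \<star> g)) \<in> cone" using 2 yP by (simp add: Tn_padd Balg_P cone_add)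
qed

lemma step_neg:
  assumes "Good (\<mu> + h) r"
  shows "Good \<mu> (r * ((\<mu> + h) * (\<mu> + (real n + 1) * h)))"
proof -
  obtain c y where c: "c \<in> cone" and y: "y \<in> Balg n" and e: "c = padd (cst (of_real r)) (G (\<mu> + h) \<star> y)"
    using assms unfolding Good_def by blast
  have yP: "y \<in> P n" using y by (rule Balg_P)
  define K where "K = padd J (cst (of_real h))"
  define Y where "Y = psum {..n} (\<lambda>i. (zbl i \<star> y) \<star> zl i)"
  define W where "W = padd J (cst (of_real \<mu> + of_nat (n + 1) * of_real h + of_real h))"
  have KP: "K \<in> Balg n" "Y \<in> Balg n" "W \<in> Balg n" using y by (simp_all add: K_def Y_def W_def)
  have Tc: "Tn c \<in> cone" by (rule cone_Tn[OF c])
  have T1: "Tn punit = padd J (cst (of_nat (n + 1) * of_real h)) \<star> K"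
    unfolding Tn_def K_def by (simp add: wick_unit_r L_A)
  have JK: "padd J (cst (of_nat (n + 1) * of_real h)) \<star> K
      = padd (cst ((of_real \<mu> + of_nat (n + 1) * of_real h) * (of_real \<mu> + of_real h))) (G \<mu> \<star> W)"
    unfolding K_def W_def by (rule L_D)
  have zG: "zbl i \<star> G (\<mu> + h) = G \<mu> \<star> zbl i" if "i \<le> n" for i
  proof -
    have "- of_real (\<mu> + h) + of_real h = (- of_real \<mu> :: complex)" by simp
    then show ?thesis unfolding G_def using L_C2[OF that, of "- of_real (\<mu> + h)"] by simp
  qed
  have T2: "Tn (G (\<mu> + h) \<star> y) = G \<mu> \<star> (Y \<star> K)"
  proof -
    have "Tn (G (\<mu> + h) \<star> y) = psum {..n} (\<lambda>i. ((zbl i \<star> G (\<mu> + h)) \<star> y) \<star> zl i) \<star> K"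
      unfolding Tn_def K_def using yP by (simp add: assoc)
    also have "\<dots> = psum {..n} (\<lambda>i. ((G \<mu> \<star> zbl i) \<star> y) \<star> zl i) \<star> K"
      by (simp add: zG)
    also have "\<dots> = G \<mu> \<star> (Y \<star> K)"
      unfolding Y_def K_def using yP by (simp add: wsimps)
    finally show ?thesis .
  qed
  have rr: "(of_real \<mu> + of_nat (n + 1) * of_real h) * (of_real \<mu> + of_real h)
      = (of_real ((\<mu> + h) * (\<mu> + (real n + 1) * h)) :: complex)" by (simp add: algebra_simps)
  have "Tn c = padd (psmult (of_real r) (padd J (cst (of_nat (n + 1) * of_real h)) \<star> K)) (G \<mu> \<star> (Y \<star> K))"
    unfolding e using yP by (simp add: Tn_padd cst_def Tn_psmult T1 T2)
  also have "\<dots> = padd (cst (of_real (r * ((\<mu> + h) * (\<mu> + (real n + 1) * h))))) (G \<mu> \<star> padd (psmult (of_real r) W) (Y \<star> K))"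
    unfolding JK rr using KP by (simp add: Balg_P wick_padd_r wick_psmult_r) (simp add: cst_def padd_def psmult_def fun_eq_iff algebra_simps)
  finally have "Tn c = padd (cst (of_real (r * ((\<mu> + h) * (\<mu> + (real n + 1) * h))))) (G \<mu> \<star> padd (psmult (of_real r) W) (Y \<star> K))" .
  moreover have "padd (psmult (of_real r) W) (Y \<star> K) \<in> Balg n" using KP by simp
  ultimately show ?thesis unfolding Good_def using Tc by blast
qed

lemma Good_scale:
  assumes "Good \<mu> r" "s \<ge> 0"
  shows "Good \<mu> (s * r)"
proof -
  obtain c y where c: "c \<in> cone" and y: "y \<in> Balg n" and e: "c = padd (cst (of_real r)) (G \<mu> \<star> y)"
    using assms unfolding Good_def by blast
  have "psmult (of_real s) c = padd (cst (of_real (s * r))) (G \<mu> \<star> psmult (of_real s) y)"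
    unfolding e using y by (simp add: Balg_P wick_psmult_r) (simp add: cst_def padd_def psmult_def fun_eq_iff algebra_simps)
  moreover have "psmult (of_real s) c \<in> cone" using cone_scale[OF c assms(2)] .
  moreover have "psmult (of_real s) y \<in> Balg n" using y by simp
  ultimately show ?thesis unfolding Good_def by blast
qed

end


context wk begin

lemma R1: "i \<le> n \<Longrightarrow> j \<le> n \<Longrightarrow> X \<in> P n \<Longrightarrow>
  zbl i \<star> (zl j \<star> X) = padd (zl j \<star> (zbl i \<star> X)) (psmult (if i = j then of_real h else 0) X)"
  by (simp add: assoc[symmetric] comm_zbl_zl wick_padd_l wick_psmult_l wick_unit_l)
lemma R2: "i \<le> n \<Longrightarrow> j \<le> n \<Longrightarrow> X \<in> P n \<Longrightarrow> zbl i \<star> (zbl j \<star> X) = zbl j \<star> (zbl i \<star> X)"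
  by (simp add: assoc[symmetric] comm_zbl_zbl)
lemma R3: "i \<le> n \<Longrightarrow> j \<le> n \<Longrightarrow> X \<in> P n \<Longrightarrow> zl i \<star> (zl j \<star> X) = zl j \<star> (zl i \<star> X)"
  by (simp add: assoc[symmetric] comm_zl_zl)

lemma E_Balg[simp]: "i \<le> n \<Longrightarrow> j \<le> n \<Longrightarrow> zl i \<star> zbl j \<in> Balg n"
proof -
  assume "i \<le> n" "j \<le> n"
  then have "Hd n (-1 + 1) (zl i \<star> zbl j)" by (intro Hd_wick Hd_zl Hd_zbl)
  then show ?thesis using \<open>i \<le> n\<close> \<open>j \<le> n\<close> by (simp add: Balg_iff)
qed

lemma psum_01: "psum {..Suc 0} F = padd (F 0) (F 1)"
  by (simp add: psum_def padd_def fun_eq_iff)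

lemma Good_n1:
  assumes n1: "n = 1"
  shows "Good \<mu> (\<mu> * (\<mu> + 2 * h) / 2)"
proof -
  define E where "E i j = zl i \<star> zbl j" for i j
  define D where "D = padd (E 0 0) (psmult (-1) (E 1 1))"
  define c where "c = padd (padd (pstar (E 0 1) \<star> E 0 1) (pstar (E 1 0) \<star> E 1 0)) (psmult (of_real (1/2)) (pstar D \<star> D))"
  define y where "y = padd (psmult (1/2) J) (cst (of_real \<mu> / 2 + of_real h))"
  have le1: "1 \<le> n" using n1 by simp
  have EB: "E i j \<in> Balg n" if "i \<le> 1" "j \<le> 1" for i j
  proof -
    have "i \<le> n" "j \<le> n" using that n1 by simp_all
    then show ?thesis by (simp add: E_def)
  qed
  have DB: "D \<in> Balg n" using EB by (simp add: D_def)
  have cc: "c \<in> cone" unfolding c_def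
    by (intro cone_add cone_sq cone_scale) (simp_all add: EB DB)
  have yB: "y \<in> Balg n" by (simp add: y_def)
  have J1: "J = padd (zl 0 \<star> zbl 0) (zl 1 \<star> zbl 1)"
    using J_eq n1 by (simp add: psum_01)
  have "c = padd (cst (of_real (\<mu> * (\<mu> + 2 * h) / 2))) (G \<mu> \<star> y)"
    unfolding c_def y_def D_def E_def G_def J1 cst_def using le1
    by (simp add: wsimps R1 R2 R3 comm_zbl_zl comm_zbl_zbl comm_zl_zl)
       (simp add: padd_def psmult_def fun_eq_iff algebra_simps)
  then show ?thesis unfolding Good_def using cc yB by blast
qed

end


context wk begin

lemma final_mem:
  assumes g: "Good \<mu> r" and r: "r < 0"
  shows "psmult (-1) punit \<in>
    {padd p q | p q. p \<in> poscone n h \<and>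
       q \<in> hermitian_part (star_ideal n h {padd (Jpoly n) (psmult (- complex_of_real \<mu>) punit)})}"
proof -
  have "Good \<mu> ((-1 / r) * r)" by (rule Good_scale[OF g]) (use r in simp)
  then have "Good \<mu> (-1)" using r by simp
  then obtain c y where c: "c \<in> cone" and y: "y \<in> Balg n" and e: "c = padd (cst (-1)) (G \<mu> \<star> y)"
    unfolding Good_def by auto
  have yP: "y \<in> P n" using y by (rule Balg_P)
  define q where "q = G \<mu> \<star> psmult (-1) y"
  have q1: "q = psmult (-1) (G \<mu> \<star> y)" unfolding q_def using yP by (simp add: wick_psmult_r)
  have sum: "padd c q = psmult (-1) punit"
    unfolding e q1 by (simp add: padd_def psmult_def cst_def fun_eq_iff)
  have q2: "q = padd (psmult (-1) punit) (psmult (-1) c)"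
    unfolding e q1 by (simp add: padd_def psmult_def cst_def fun_eq_iff)
  have herm: "pstar q = q"
    unfolding q2 by (simp add: pstar_padd pstar_psmult cone_herm[OF c])
  have inI: "q \<in> star_ideal n h {padd (Jpoly n) (psmult (- complex_of_real \<mu>) punit)}"
    unfolding star_ideal_def
  proof (rule InterI)
    fix I assume "I \<in> {I. I \<subseteq> Balg n \<and> {padd (Jpoly n) (psmult (- complex_of_real \<mu>) punit)} \<subseteq> I \<and> (\<lambda>_. 0) \<in> I
       \<and> (\<forall>x\<in>I. \<forall>y\<in>I. padd x y \<in> I)
       \<and> (\<forall>c. \<forall>x\<in>I. psmult c x \<in> I)
       \<and> (\<forall>a\<in>Balg n. \<forall>x\<in>I. wick n h a x \<in> I \<and> wick n h x a \<in> I)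
       \<and> (\<forall>x\<in>I. pstar x \<in> I)}"
    then have I: "padd (Jpoly n) (psmult (- complex_of_real \<mu>) punit) \<in> I"
      "\<forall>a\<in>Balg n. \<forall>x\<in>I. wick n h a x \<in> I \<and> wick n h x a \<in> I" by auto
    have "G \<mu> \<in> I" using I(1) by (simp add: G_def cst_def)
    moreover have "psmult (-1) y \<in> Balg n" using y by simp
    ultimately show "q \<in> I" unfolding q_def using I(2) by blast
  qed
  have "q \<in> hermitian_part (star_ideal n h {padd (Jpoly n) (psmult (- complex_of_real \<mu>) punit)})"
    unfolding hermitian_part_def using inI herm by simp
  moreover have "c \<in> poscone n h" using c by (simp add: cone_def)
  ultimately have "\<exists>p q. psmult (-1) punit = padd p q \<and> p \<in> poscone n h \<and>
       q \<in> hermitian_part (star_ideal n h {padd (Jpoly n) (psmult (- complex_of_real \<mu>) punit)})"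
    using sum by metis
  then show ?thesis by simp
qed

lemma base:
  assumes n: "1 \<le> n" and a: "-(real n + 1) * h < \<mu>" and b: "\<mu> < 0"
  shows "\<exists>r<0. Good \<mu> r"
proof (cases "- real n * h < \<mu>")
  case True
  have "Good \<mu> (1 * (\<mu> * (\<mu> + real n * h)))" using step_pos[OF Good_base[of "\<mu> - h"]] by simp
  moreover have "\<mu> * (\<mu> + real n * h) < 0" using True b by (simp add: mult_neg_pos)
  ultimately show ?thesis by auto
next
  case False
  show ?thesis
  proof (cases "\<mu> < - h")
    case True
    have a1: "\<mu> + h < 0" using True by simp
    have a2: "\<mu> + (real n + 1) * h > 0" using a by (simp add: algebra_simps)
    have "Good \<mu> (1 * ((\<mu> + h) * (\<mu> + (real n + 1) * h)))" using step_neg[OF Good_base[of "\<mu> + h"]] by simp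
    moreover have "(\<mu> + h) * (\<mu> + (real n + 1) * h) < 0" using mult_neg_pos[OF a1 a2] .
    ultimately show ?thesis by auto
  next
    case F2: False
    have "real n * h \<le> h" using False F2 by linarith
    then have "real n \<le> 1" using hpos by simp
    then have n1: "n = 1" using n by simp
    then have mu: "\<mu> = - h" using False F2 by simp
    define r0 where "r0 = \<mu> * (\<mu> + 2 * h) / 2"
    have g0: "Good \<mu> r0" unfolding r0_def by (rule Good_n1[OF n1])
    have "r0 < 0" using mu hpos by (simp add: r0_def mult_neg_pos)
    then show ?thesis using g0 by blast
  qed
qed

lemma pos_ind:
  assumes n: "1 \<le> n"
  shows "\<forall>\<mu>. (real k - 1) * h < \<mu> \<and> \<mu> < real k * h \<longrightarrow> (\<exists>r<0. Good \<mu> r)"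
proof (induction k)
  case 0
  show ?case
  proof (intro allI impI)
    fix \<mu> assume m: "(real 0 - 1) * h < \<mu> \<and> \<mu> < real 0 * h"
    have m1: "- h < \<mu>" "\<mu> < 0" using m by simp_all
    have "0 \<le> real n * h" using hpos by simp
    then have "-(real n + 1) * h \<le> - h" by (simp add: algebra_simps)
    then have "-(real n + 1) * h < \<mu>" "\<mu> < 0" using m1 by linarith+
    then show "\<exists>r<0. Good \<mu> r" using base[OF n] by blast
  qed
next
  case (Suc k)
  show ?case
  proof (intro allI impI)
    fix \<mu> assume m: "(real (Suc k) - 1) * h < \<mu> \<and> \<mu> < real (Suc k) * h"
    then have "(real k - 1) * h < \<mu> - h \<and> \<mu> - h < real k * h" by (simp add: algebra_simps)
    then obtain r where r: "r < 0" "Good (\<mu> - h) r" using Suc by blast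
    have "0 \<le> h * real k" using hpos by simp
    moreover have "h * real k < \<mu>" using m by (simp add: algebra_simps)
    ultimately have mpos: "\<mu> > 0" by linarith
    have "Good \<mu> (r * (\<mu> * (\<mu> + real n * h)))" by (rule step_pos[OF r(2)])
    moreover have "r * (\<mu> * (\<mu> + real n * h)) < 0" using r(1) mpos hpos
      by (intro mult_neg_pos) (simp_all add: add_pos_nonneg)
    ultimately show "\<exists>r<0. Good \<mu> r" by blast
  qed
qed

lemma neg_ind:
  assumes n: "1 \<le> n"
  shows "\<forall>\<mu>. -(real n + 1 + real k) * h < \<mu> \<and> \<mu> < -(real n + real k) * h \<longrightarrow> (\<exists>r<0. Good \<mu> r)"
proof (induction k)
  case 0
  show ?case
  proof (intro allI impI)
    fix \<mu> assume m: "-(real n + 1 + real 0) * h < \<mu> \<and> \<mu> < -(real n + real 0) * h"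
    have "- real n * h < 0" using n hpos by simp
    then have "-(real n + 1) * h < \<mu>" "\<mu> < 0" using m by auto
    then show "\<exists>r<0. Good \<mu> r" using base[OF n] by blast
  qed
next
  case (Suc k)
  show ?case
  proof (intro allI impI)
    fix \<mu> assume m: "-(real n + 1 + real (Suc k)) * h < \<mu> \<and> \<mu> < -(real n + real (Suc k)) * h"
    then have "-(real n + 1 + real k) * h < \<mu> + h \<and> \<mu> + h < -(real n + real k) * h" by (simp add: algebra_simps)
    then obtain r where r: "r < 0" "Good (\<mu> + h) r" using Suc by blast
    have f1: "0 \<le> h * real n" "0 \<le> h * real k" using hpos by simp_all
    have m2: "\<mu> + (h * real k + h * real n) < - h" using m by (simp add: algebra_simps)
    have a1: "\<mu> + h < 0" using m2 f1 by linarith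
    have a2: "\<mu> + (real n + 1) * h < 0" using m2 f1 by (simp add: algebra_simps)
    have "Good \<mu> (r * ((\<mu> + h) * (\<mu> + (real n + 1) * h)))" by (rule step_neg[OF r(2)])
    moreover have "r * ((\<mu> + h) * (\<mu> + (real n + 1) * h)) < 0" using r(1) a1 a2
      by (intro mult_neg_pos mult_neg_neg)
    ultimately show "\<exists>r<0. Good \<mu> r" by blast
  qed
qed

end

theorem proposition5p9:
  fixes n :: nat and h \<mu> :: real
  assumes "n \<ge> 1" and "h > 0"
    and "\<forall>k::nat. \<mu> \<noteq> h * real k"
    and "\<forall>k::nat. \<mu> \<noteq> - h * (1 + real n + real k)"
  shows "psmult (-1) punit \<in>
    {padd p q | p q. p \<in> poscone n h \<and>
       q \<in> hermitian_part (star_ideal n h {padd (Jpoly n) (psmult (- complex_of_real \<mu>) punit)})}"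
proof -
  interpret wk n h using assms(2) by unfold_locales
  have n: "1 \<le> n" using assms(1) .
  have hp: "h > 0" using assms(2) .
  have "\<exists>r<0. Good \<mu> r"
  proof (cases "\<mu> \<ge> 0")
    case True
    define x where "x = \<mu> / h"
    have mu: "\<mu> = x * h" using hp by (simp add: x_def)
    have x0: "x \<ge> 0" using True hp by (simp add: x_def)
    define k where "k = nat \<lceil>x\<rceil>"
    have kx: "real k = of_int \<lceil>x\<rceil>" using x0 by (simp add: k_def)
    have ni: "x \<noteq> real k" using assms(3) mu by (metis mult.commute)
    have c1: "of_int \<lceil>x\<rceil> - 1 < x" "x \<le> of_int \<lceil>x\<rceil>" by linarith+
    then have "real k - 1 < x" "x \<le> real k" using kx by simp_all
    then have "real k - 1 < x" "x < real k" using ni by (simp_all add: le_neq_trans)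
    then have "(real k - 1) * h < \<mu> \<and> \<mu> < real k * h" using hp mu by simp
    then show ?thesis using pos_ind[OF n, of k] by blast
  next
    case False
    show ?thesis
    proof (cases "-(real n + 1) * h < \<mu>")
      case True
      then show ?thesis using base[OF n] False by simp
    next
      case F2: False
      define t where "t = - \<mu> / h - (real n + 1)"
      have mu: "\<mu> = - h * (1 + real n + t)" using hp by (simp add: t_def field_simps)
      have t0: "t \<ge> 0" using F2 hp by (simp add: t_def field_simps)
      define k where "k = nat \<lfloor>t\<rfloor>"
      have kt: "real k = of_int \<lfloor>t\<rfloor>" using t0 by (simp add: k_def)
      have ni: "t \<noteq> real k" using assms(4) mu by metis
      have c1: "of_int \<lfloor>t\<rfloor> \<le> t" "t < of_int \<lfloor>t\<rfloor> + 1" by linarith+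
      have "real k \<le> t" using c1(1) kt by simp
      then have tk1: "real k < t" using ni by (simp add: le_neq_trans)
      have tk2: "t < real k + 1" using c1(2) kt by simp
      have m1: "h * real k < h * t" using tk1 hp by simp
      have m2: "h * t < h * (real k + 1)" using tk2 hp by simp
      have "-(real n + 1 + real (Suc k)) * h < \<mu> \<and> \<mu> < -(real n + real (Suc k)) * h"
        using m1 m2 unfolding mu by (simp add: algebra_simps)
      then show ?thesis using neg_ind[OF n, of "Suc k"] by blast
    qed
  qed
  then obtain r where "r < 0" "Good \<mu> r" by blast
  then show ?thesis by (rule final_mem[rotated])
qed


end
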